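(* For each $0\ne a\in\mathbb{R}$, the translation operator $\tau_a:C^\infty(\mathbb{R},\mathbb{C})\to C^\infty(\mathbb{R},\mathbb{C})$, $\tau_a(f)(x)=f(x+a)$, supports a hypercyclic algebra.
   Context: $C^\infty(\mathbb{R},\mathbb{C})$ is the Fréchet algebra (pointwise operations) of complex-valued smooth functions on $\mathbb{R}$ with seminorms $p_k(f)=\max_{0\le j\le k}\max_{t\in[-k,k]}|f^{(j)}(t)|$. An operator $T$ supports a hypercyclic algebra if there is a subalgebra $A\ne\{0\}$ all of whose nonzero elements $f$ have dense orbit $\{T^nf:n\ge0\}$. *)

theory Defs
  imports "HOL-Analysis.Analysis"
begin

fun vderiv :: "nat \<Rightarrow> (real \<Rightarrow> complex) \<Rightarrow> (real \<Rightarrow> complex)" where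
  "vderiv 0 f = f"
| "vderiv (Suc j) f = (\<lambda>x. vector_derivative (vderiv j f) (at x))"

definition smooth_fun :: "(real \<Rightarrow> complex) set" where
  "smooth_fun = {f. \<forall>j x. vderiv j f differentiable (at x)}"

definition seminorm_p :: "nat \<Rightarrow> (real \<Rightarrow> complex) \<Rightarrow> real" where
  "seminorm_p k f = (SUP j\<in>{..k}. SUP t\<in>{-real k..real k}. norm (vderiv j f t))"

definition tau :: "real \<Rightarrow> (real \<Rightarrow> complex) \<Rightarrow> (real \<Rightarrow> complex)" where
  "tau a f = (\<lambda>x. f (x + a))"

text \<open>Density of the orbit of f under T in the Frechet space C^infinity(R,C):
  every basic neighbourhood {h. p_k(h - g) < e} of every g meets the orbit.\<close>
definition hypercyclic_vector :: "((real \<Rightarrow> complex) \<Rightarrow> (real \<Rightarrow> complex)) \<Rightarrow> (real \<Rightarrow> complex) \<Rightarrow> bool" where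
  "hypercyclic_vector T f \<longleftrightarrow>
     (\<forall>g\<in>smooth_fun. \<forall>k. \<forall>e>0. \<exists>n. seminorm_p k (\<lambda>x. (T ^^ n) f x - g x) < e)"

definition smooth_subalgebra :: "(real \<Rightarrow> complex) set \<Rightarrow> bool" where
  "smooth_subalgebra A \<longleftrightarrow> A \<subseteq> smooth_fun \<and> (\<lambda>x. 0) \<in> A \<and>
     (\<forall>f\<in>A. \<forall>g\<in>A. (\<lambda>x. f x + g x) \<in> A \<and> (\<lambda>x. f x * g x) \<in> A) \<and>
     (\<forall>c::complex. \<forall>f\<in>A. (\<lambda>x. c * f x) \<in> A)"

definition supports_hypercyclic_algebra :: "((real \<Rightarrow> complex) \<Rightarrow> (real \<Rightarrow> complex)) \<Rightarrow> bool" where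
  "supports_hypercyclic_algebra T \<longleftrightarrow>
     (\<exists>A. smooth_subalgebra A \<and> A \<noteq> {\<lambda>x. 0} \<and>
          (\<forall>f\<in>A. f \<noteq> (\<lambda>x. 0) \<longrightarrow> hypercyclic_vector T f))"

end

theory Submission
  imports Defs "HOL-Complex_Analysis.Complex_Analysis"
begin

lemma vderiv_1: "vderiv 1 f = (\<lambda>x. vector_derivative f (at x))"
  by simp

declare vderiv.simps(2)[simp del]

lemma vderiv_Suc0[simp]: "vderiv (Suc 0) f = (\<lambda>x. vector_derivative f (at x))"
  by (simp add: vderiv.simps(2))

lemma vderiv_Suc': "vderiv (Suc i) f = vderiv i (vderiv 1 f)"
proof (induction i)
  case 0 then show ?case by simp
next
  case (Suc i)
  have "vderiv (Suc (Suc i)) f = (\<lambda>x. vector_derivative (vderiv (Suc i) f) (at x))"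
    by (rule vderiv.simps(2))
  also have "\<dots> = (\<lambda>x. vector_derivative (vderiv i (vderiv 1 f)) (at x))"
    using Suc by (simp add: vderiv.simps(2))
  also have "\<dots> = vderiv (Suc i) (vderiv 1 f)" by (rule vderiv.simps(2)[symmetric])
  finally show ?case .
qed

lemma vector_derivative_local:
  assumes "open U" "x \<in> U" "\<And>y. y \<in> U \<Longrightarrow> f y = g y"
  shows "vector_derivative f (at x) = vector_derivative g (at x)"
proof -
  have "(f has_vector_derivative D) (at x) \<longleftrightarrow> (g has_vector_derivative D) (at x)" for D
    using assms has_vector_derivative_transform_within_open[of _ _ x U] by metis
  then show ?thesis unfolding vector_derivative_def by simp
qed

lemma vderiv_local:
  assumes "open U" "\<And>y. y \<in> U \<Longrightarrow> f y = g y" "x \<in> U"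
  shows "vderiv i f x = vderiv i g x"
  using assms(3)
proof (induction i arbitrary: x)
  case 0 then show ?case using assms by simp
next
  case (Suc i)
  then show ?case using vector_derivative_local[OF assms(1) Suc.prems, of "vderiv i f" "vderiv i g"] Suc.IH
    by (simp add: vderiv.simps(2))
qed

lemma differentiable_local:
  fixes f g :: "real \<Rightarrow> complex"
  assumes "open U" "\<And>y. y \<in> U \<Longrightarrow> f y = g y" "x \<in> U" "f differentiable (at x)"
  shows "g differentiable (at x)"
proof -
  have "(f has_vector_derivative (vector_derivative f (at x))) (at x)"
    using assms(4) vector_derivative_works by blast
  then have "(g has_vector_derivative (vector_derivative f (at x))) (at x)"
    using has_vector_derivative_transform_within_open assms(1,2,3) by blast
  then show ?thesis by (rule differentiableI_vector)
qed

definition sm_upto :: "nat \<Rightarrow> real set \<Rightarrow> (real \<Rightarrow> complex) \<Rightarrow> bool" where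
  "sm_upto n U f \<longleftrightarrow> (\<forall>i\<le>n. \<forall>x\<in>U. vderiv i f differentiable (at x))"

definition sm_on :: "real set \<Rightarrow> (real \<Rightarrow> complex) \<Rightarrow> bool" where
  "sm_on U f \<longleftrightarrow> (\<forall>n. sm_upto n U f)"

lemma smooth_fun_sm_on: "f \<in> smooth_fun \<longleftrightarrow> sm_on UNIV f"
  by (auto simp: smooth_fun_def sm_on_def sm_upto_def)

lemma sm_upto_Suc:
  "sm_upto (Suc n) U f \<longleftrightarrow> (\<forall>x\<in>U. f differentiable (at x)) \<and> sm_upto n U (vderiv 1 f)"
proof
  assume A: "sm_upto (Suc n) U f"
  have "\<forall>x\<in>U. vderiv 0 f differentiable (at x)" using A unfolding sm_upto_def by blast
  moreover have "sm_upto n U (vderiv 1 f)" unfolding sm_upto_def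
  proof (intro allI impI)
    fix i assume "i \<le> n"
    then have "\<forall>x\<in>U. vderiv (Suc i) f differentiable (at x)" using A unfolding sm_upto_def
      by (metis Suc_le_mono)
    then show "\<forall>x\<in>U. vderiv i (vderiv 1 f) differentiable (at x)" by (simp only: vderiv_Suc'[of i f])
  qed
  ultimately show "(\<forall>x\<in>U. f differentiable (at x)) \<and> sm_upto n U (vderiv 1 f)" by simp
next
  assume B: "(\<forall>x\<in>U. f differentiable (at x)) \<and> sm_upto n U (vderiv 1 f)"
  show "sm_upto (Suc n) U f" unfolding sm_upto_def
  proof (intro allI impI)
    fix i assume "i \<le> Suc n"
    show "\<forall>x\<in>U. vderiv i f differentiable (at x)"
    proof (cases i)
      case 0 then show ?thesis using B by simp
    next
      case (Suc i')
      then have "i' \<le> n" using \<open>i \<le> Suc n\<close> by simp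
      then have "\<forall>x\<in>U. vderiv i' (vderiv 1 f) differentiable (at x)" using B unfolding sm_upto_def by blast
      then show ?thesis using Suc by (simp only: vderiv_Suc'[of i' f])
    qed
  qed
qed

lemma sm_upto_0: "sm_upto 0 U f \<longleftrightarrow> (\<forall>x\<in>U. f differentiable (at x))"
  by (simp add: sm_upto_def)

lemma sm_upto_mono: "sm_upto n U f \<Longrightarrow> m \<le> n \<Longrightarrow> V \<subseteq> U \<Longrightarrow> sm_upto m V f"
  by (auto simp: sm_upto_def)

lemma sm_upto_local:
  assumes "open U" "\<And>y. y \<in> U \<Longrightarrow> f y = g y" "sm_upto n U f"
  shows "sm_upto n U g"
  unfolding sm_upto_def
proof (intro allI impI ballI)
  fix i x assume "i \<le> n" "x \<in> U"
  then have "vderiv i f differentiable (at x)" using assms(3) by (auto simp: sm_upto_def)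
  moreover have "\<And>y. y \<in> U \<Longrightarrow> vderiv i f y = vderiv i g y"
    using vderiv_local[of U f g] assms(1,2) by blast
  ultimately show "vderiv i g differentiable (at x)"
    using differentiable_local[OF assms(1) _ \<open>x \<in> U\<close>] by blast
qed

lemma sm_on_local:
  assumes "open U" "\<And>y. y \<in> U \<Longrightarrow> f y = g y" "sm_on U f"
  shows "sm_on U g"
  using assms sm_upto_local unfolding sm_on_def by blast


lemma vd_lin_at:
  fixes f g :: "real \<Rightarrow> complex"
  assumes "f differentiable (at y)" "g differentiable (at y)"
  shows "vector_derivative (\<lambda>x. a * f x + b * g x) (at y) =
           a * vector_derivative f (at y) + b * vector_derivative g (at y)"
proof -
  have f: "(f has_vector_derivative vector_derivative f (at y)) (at y)"
    using assms(1) vector_derivative_works by blast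
  have g: "(g has_vector_derivative vector_derivative g (at y)) (at y)"
    using assms(2) vector_derivative_works by blast
  have "((\<lambda>x. a * f x + b * g x) has_vector_derivative
          (a * vector_derivative f (at y) + b * vector_derivative g (at y))) (at y)"
    using has_vector_derivative_add[OF has_vector_derivative_mult[OF has_vector_derivative_const f]
        has_vector_derivative_mult[OF has_vector_derivative_const g]] by simp
  then show ?thesis by (rule vector_derivative_at)
qed

lemma differentiable_lin_at:
  fixes f g :: "real \<Rightarrow> complex"
  assumes "f differentiable (at y)" "g differentiable (at y)"
  shows "(\<lambda>x. a * f x + b * g x) differentiable (at y)"
proof -
  have f: "(f has_vector_derivative vector_derivative f (at y)) (at y)"
    using assms(1) vector_derivative_works by blast
  have g: "(g has_vector_derivative vector_derivative g (at y)) (at y)"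
    using assms(2) vector_derivative_works by blast
  show ?thesis
    using has_vector_derivative_add[OF has_vector_derivative_mult[OF has_vector_derivative_const f]
        has_vector_derivative_mult[OF has_vector_derivative_const g]] differentiableI_vector by blast
qed

lemma vderiv_lin:
  fixes f g :: "real \<Rightarrow> complex"
  assumes "open U" "sm_upto n U f" "sm_upto n U g" "i \<le> Suc n" "x \<in> U"
  shows "vderiv i (\<lambda>x. a * f x + b * g x) x = a * vderiv i f x + b * vderiv i g x"
  using assms(2-5)
proof (induction i arbitrary: n f g x)
  case 0 then show ?case by simp
next
  case (Suc i)
  have df: "\<forall>y\<in>U. f differentiable (at y)" and dg: "\<forall>y\<in>U. g differentiable (at y)"
    using Suc.prems unfolding sm_upto_def by (metis le0 vderiv.simps(1))+
  have eq1: "\<forall>y\<in>U. vderiv 1 (\<lambda>x. a * f x + b * g x) y = a * vderiv 1 f y + b * vderiv 1 g y"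
  proof
    fix y assume "y \<in> U"
    then show "vderiv 1 (\<lambda>x. a * f x + b * g x) y = a * vderiv 1 f y + b * vderiv 1 g y"
      using df dg vd_lin_at[of f y g a b] by (simp only: vderiv_1)
  qed
  have "vderiv (Suc i) (\<lambda>x. a * f x + b * g x) x = vderiv i (vderiv 1 (\<lambda>x. a * f x + b * g x)) x"
    by (simp only: vderiv_Suc'[of i])
  also have "\<dots> = vderiv i (\<lambda>y. a * vderiv 1 f y + b * vderiv 1 g y) x"
    using vderiv_local[of U "vderiv 1 (\<lambda>x. a * f x + b * g x)" "\<lambda>y. a * vderiv 1 f y + b * vderiv 1 g y" x i]
      assms(1) eq1 Suc.prems(4) by blast
  also have "\<dots> = a * vderiv i (vderiv 1 f) x + b * vderiv i (vderiv 1 g) x"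
  proof (cases n)
    case 0
    then have "i = 0" using Suc.prems by simp
    then show ?thesis by simp
  next
    case (Suc n')
    then have "sm_upto n' U (vderiv 1 f)" "sm_upto n' U (vderiv 1 g)" "i \<le> Suc n'"
      using Suc.prems sm_upto_Suc by auto
    then show ?thesis using Suc.IH Suc.prems(4) by blast
  qed
  also have "\<dots> = a * vderiv (Suc i) f x + b * vderiv (Suc i) g x"
    by (simp only: vderiv_Suc'[of i])
  finally show ?case .
qed

lemma sm_upto_lin:
  fixes f g :: "real \<Rightarrow> complex"
  assumes "open U" "sm_upto n U f" "sm_upto n U g"
  shows "sm_upto n U (\<lambda>x. a * f x + b * g x)"
  unfolding sm_upto_def
proof (intro allI impI ballI)
  fix i x assume i: "i \<le> n" and x: "x \<in> U"
  have eq: "\<And>y. y \<in> U \<Longrightarrow> a * vderiv i f y + b * vderiv i g y = vderiv i (\<lambda>x. a * f x + b * g x) y"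
    using vderiv_lin[OF assms] i by simp
  have "(\<lambda>y. a * vderiv i f y + b * vderiv i g y) differentiable (at x)"
    using differentiable_lin_at assms(2,3) i x unfolding sm_upto_def by blast
  then show "vderiv i (\<lambda>x. a * f x + b * g x) differentiable (at x)"
    using differentiable_local[of U "\<lambda>y. a * vderiv i f y + b * vderiv i g y"
        "vderiv i (\<lambda>x. a * f x + b * g x)" x] assms(1) eq x by blast
qed

lemma sm_upto_add:
  fixes f g :: "real \<Rightarrow> complex"
  assumes "open U" "sm_upto n U f" "sm_upto n U g"
  shows "sm_upto n U (\<lambda>x. f x + g x)"
  using sm_upto_lin[OF assms, of 1 1] by simp

lemma sm_upto_diff:
  fixes f g :: "real \<Rightarrow> complex"
  assumes "open U" "sm_upto n U f" "sm_upto n U g"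
  shows "sm_upto n U (\<lambda>x. f x - g x)"
  using sm_upto_lin[OF assms, of 1 "-1"] by simp

lemma sm_upto_cmult:
  fixes f :: "real \<Rightarrow> complex"
  assumes "open U" "sm_upto n U f"
  shows "sm_upto n U (\<lambda>x. c * f x)"
  using sm_upto_lin[OF assms assms(2), of c 0] by simp

lemma vderiv_add:
  fixes f g :: "real \<Rightarrow> complex"
  assumes "open U" "sm_upto n U f" "sm_upto n U g" "i \<le> Suc n" "x \<in> U"
  shows "vderiv i (\<lambda>x. f x + g x) x = vderiv i f x + vderiv i g x"
  using vderiv_lin[OF assms, of 1 1] by simp

lemma vderiv_diff:
  fixes f g :: "real \<Rightarrow> complex"
  assumes "open U" "sm_upto n U f" "sm_upto n U g" "i \<le> Suc n" "x \<in> U"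
  shows "vderiv i (\<lambda>x. f x - g x) x = vderiv i f x - vderiv i g x"
  using vderiv_lin[OF assms, of 1 "-1"] by simp

lemma vderiv_cmult:
  fixes f :: "real \<Rightarrow> complex"
  assumes "open U" "sm_upto n U f" "i \<le> Suc n" "x \<in> U"
  shows "vderiv i (\<lambda>x. c * f x) x = c * vderiv i f x"
  using vderiv_lin[OF assms(1,2,2,3,4), of c 0] by simp

lemma vderiv_const: "vderiv i (\<lambda>x. c) = (\<lambda>x. if i = 0 then c else 0)"
proof (induction i)
  case 0 then show ?case by simp
next
  case (Suc i) then show ?case by (simp add: vderiv.simps(2))
qed

lemma sm_upto_const: "sm_upto n U (\<lambda>x. c)"
  unfolding sm_upto_def vderiv_const by simp

lemma sm_upto_mult:
  fixes f g :: "real \<Rightarrow> complex"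
  assumes "open U" "sm_upto n U f" "sm_upto n U g"
  shows "sm_upto n U (\<lambda>x. f x * g x)"
  using assms(2,3)
proof (induction n arbitrary: f g)
  case 0 then show ?case unfolding sm_upto_0 by (simp add: differentiable_mult)
next
  case (Suc n)
  have df: "\<forall>y\<in>U. f differentiable (at y)" and dg: "\<forall>y\<in>U. g differentiable (at y)"
    using Suc.prems sm_upto_Suc by blast+
  have eq: "\<And>y. y \<in> U \<Longrightarrow> f y * vderiv 1 g y + vderiv 1 f y * g y = vderiv 1 (\<lambda>x. f x * g x) y"
    using df dg by (simp add: vderiv_1)
  have "sm_upto n U (\<lambda>y. f y * vderiv 1 g y)"
    using Suc.IH Suc.prems sm_upto_Suc sm_upto_mono[of "Suc n" U f n U] by auto
  moreover have "sm_upto n U (\<lambda>y. vderiv 1 f y * g y)"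
    using Suc.IH Suc.prems sm_upto_Suc sm_upto_mono[of "Suc n" U g n U] by auto
  ultimately have "sm_upto n U (\<lambda>y. f y * vderiv 1 g y + vderiv 1 f y * g y)"
    using sm_upto_add[OF assms(1)] by blast
  then have "sm_upto n U (vderiv 1 (\<lambda>x. f x * g x))"
    using sm_upto_local[of U "\<lambda>y. f y * vderiv 1 g y + vderiv 1 f y * g y" "vderiv 1 (\<lambda>x. f x * g x)"]
      assms(1) eq by blast
  moreover have "\<forall>y\<in>U. (\<lambda>x. f x * g x) differentiable (at y)"
    using df dg by (simp add: differentiable_mult)
  ultimately show ?case using sm_upto_Suc by blast
qed

lemma sm_upto_comp:
  fixes q :: "complex \<Rightarrow> complex" and \<gamma> :: "real \<Rightarrow> complex"
  assumes "open U" "open S" "q holomorphic_on S" "\<And>x. x \<in> U \<Longrightarrow> \<gamma> x \<in> S" "sm_upto n U \<gamma>"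
  shows "sm_upto n U (\<lambda>x. q (\<gamma> x))"
  using assms(3,5)
proof (induction n arbitrary: q)
  have hv: "((\<lambda>x. q (\<gamma> x)) has_vector_derivative (vector_derivative \<gamma> (at y) * deriv q (\<gamma> y))) (at y)"
    if "q holomorphic_on S" "\<gamma> differentiable (at y)" "y \<in> U" for q y
  proof -
    have "(q has_field_derivative deriv q (\<gamma> y)) (at (\<gamma> y))"
      using holomorphic_derivI[OF that(1) assms(2) assms(4)[OF that(3)]] by simp
    then show ?thesis
      using field_vector_diff_chain_at[OF vector_derivative_works[THEN iffD1, OF that(2)]]
      by (simp add: o_def)
  qed
  {
    case 0 then show ?case unfolding sm_upto_0 using hv differentiableI_vector by blast
  next
    case (Suc n)
    have dg: "\<forall>y\<in>U. \<gamma> differentiable (at y)" using Suc.prems sm_upto_Suc by blast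
    have eq: "\<And>y. y \<in> U \<Longrightarrow> vderiv 1 \<gamma> y * deriv q (\<gamma> y) = vderiv 1 (\<lambda>x. q (\<gamma> x)) y"
    proof -
      fix y assume y: "y \<in> U"
      show "vderiv 1 \<gamma> y * deriv q (\<gamma> y) = vderiv 1 (\<lambda>x. q (\<gamma> x)) y"
        using vector_derivative_at[OF hv[OF Suc.prems(1) _ y]] dg y by simp
    qed
    have "sm_upto n U (\<lambda>y. deriv q (\<gamma> y))"
      using Suc.IH[of "deriv q"] holomorphic_deriv[OF Suc.prems(1) assms(2)] Suc.prems(2)
        sm_upto_mono[of "Suc n" U \<gamma> n U] by auto
    moreover have "sm_upto n U (vderiv 1 \<gamma>)" using Suc.prems sm_upto_Suc by blast
    ultimately have "sm_upto n U (\<lambda>y. vderiv 1 \<gamma> y * deriv q (\<gamma> y))"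
      using sm_upto_mult[OF assms(1)] by blast
    then have "sm_upto n U (vderiv 1 (\<lambda>x. q (\<gamma> x)))"
      using sm_upto_local[of U "\<lambda>y. vderiv 1 \<gamma> y * deriv q (\<gamma> y)" "vderiv 1 (\<lambda>x. q (\<gamma> x))"]
        assms(1) eq by blast
    moreover have "\<forall>y\<in>U. (\<lambda>x. q (\<gamma> x)) differentiable (at y)"
      using hv[OF Suc.prems(1)] dg differentiableI_vector by blast
    ultimately show ?case using sm_upto_Suc by blast
  }
qed

lemma sm_on_lin: "open U \<Longrightarrow> sm_on U f \<Longrightarrow> sm_on U g \<Longrightarrow> sm_on U (\<lambda>x. a * f x + b * g x)"
  using sm_upto_lin unfolding sm_on_def by blast
lemma sm_on_add: "open U \<Longrightarrow> sm_on U f \<Longrightarrow> sm_on U g \<Longrightarrow> sm_on U (\<lambda>x. f x + g x)"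
  using sm_upto_add unfolding sm_on_def by blast
lemma sm_on_diff: "open U \<Longrightarrow> sm_on U f \<Longrightarrow> sm_on U g \<Longrightarrow> sm_on U (\<lambda>x. f x - g x)"
  using sm_upto_diff unfolding sm_on_def by blast
lemma sm_on_mult: "open U \<Longrightarrow> sm_on U f \<Longrightarrow> sm_on U g \<Longrightarrow> sm_on U (\<lambda>x. f x * g x)"
  using sm_upto_mult unfolding sm_on_def by blast
lemma sm_on_cmult: "open U \<Longrightarrow> sm_on U f \<Longrightarrow> sm_on U (\<lambda>x. c * f x)"
  using sm_upto_cmult unfolding sm_on_def by blast
lemma sm_on_const: "sm_on U (\<lambda>x. c)"
  using sm_upto_const unfolding sm_on_def by blast
lemma sm_on_comp:
  "open U \<Longrightarrow> open S \<Longrightarrow> q holomorphic_on S \<Longrightarrow> (\<And>x. x \<in> U \<Longrightarrow> \<gamma> x \<in> S) \<Longrightarrow> sm_on U \<gamma>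
    \<Longrightarrow> sm_on U (\<lambda>x. q (\<gamma> x))"
  using sm_upto_comp unfolding sm_on_def by blast
lemma sm_on_subset: "sm_on U f \<Longrightarrow> V \<subseteq> U \<Longrightarrow> sm_on V f"
  unfolding sm_on_def using sm_upto_mono by blast

lemma sm_on_vderiv1: "sm_on U f \<Longrightarrow> sm_on U (vderiv 1 f)"
  unfolding sm_on_def using sm_upto_Suc by blast

lemma sm_on_vderiv: "sm_on U f \<Longrightarrow> sm_on U (vderiv i f)"
proof (induction i arbitrary: f)
  case 0 then show ?case by simp
next
  case (Suc i) then show ?case using sm_on_vderiv1 by (simp only: vderiv_Suc'[of i]) 
qed

lemma sm_on_differentiable: "sm_on U f \<Longrightarrow> x \<in> U \<Longrightarrow> vderiv i f differentiable (at x)"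
  unfolding sm_on_def sm_upto_def by blast


lemma tau_iter: "(tau a ^^ n) f = (\<lambda>x. f (x + real n * a))"
proof (induction n)
  case 0 then show ?case by simp
next
  case (Suc n) then show ?case by (simp add: tau_def algebra_simps)
qed

lemma hasvd_affine:
  fixes f :: "real \<Rightarrow> complex"
  assumes "sm_on UNIV f"
  shows "((\<lambda>y. c * vderiv i f (s * y + b)) has_vector_derivative
            (c * (s * vderiv (Suc i) f (s * x + b)))) (at x)"
proof -
  have d: "(vderiv i f has_vector_derivative vderiv (Suc i) f (s * x + b)) (at (s * x + b))"
    using vector_derivative_works[THEN iffD1, OF sm_on_differentiable[OF assms, of "s * x + b" i]]
    by (simp add: vderiv.simps(2))
  have a: "((\<lambda>y. s * y + b) has_vector_derivative s) (at x)"
    using has_real_derivative_iff_has_vector_derivative[THEN iffD1]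
    by (auto intro!: derivative_eq_intros)
  have "((vderiv i f \<circ> (\<lambda>y. s * y + b)) has_vector_derivative (s *\<^sub>R vderiv (Suc i) f (s * x + b))) (at x)"
    by (rule vector_diff_chain_at[OF a d])
  then have h: "((\<lambda>y. vderiv i f (s * y + b)) has_vector_derivative (s * vderiv (Suc i) f (s * x + b))) (at x)"
    by (simp add: o_def scaleR_conv_of_real)
  from has_vector_derivative_mult[OF has_vector_derivative_const[of c] h] show ?thesis by simp
qed

lemma vderiv_affine:
  fixes f :: "real \<Rightarrow> complex"
  assumes "sm_on UNIV f"
  shows "vderiv i (\<lambda>x. f (s * x + b)) = (\<lambda>x. of_real s ^ i * vderiv i f (s * x + b))"
proof (induction i)
  case 0 then show ?case by simp
next
  case (Suc i)
  have "vderiv (Suc i) (\<lambda>x. f (s * x + b)) = (\<lambda>x. vector_derivative (vderiv i (\<lambda>x. f (s * x + b))) (at x))"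
    by (simp add: vderiv.simps(2))
  also have "\<dots> = (\<lambda>x. of_real s ^ Suc i * vderiv (Suc i) f (s * x + b))"
    using vector_derivative_at[OF hasvd_affine[OF assms, of "of_real s ^ i" i s b]] Suc
    by (simp add: ac_simps)
  finally show ?case .
qed

lemma sm_on_affine:
  fixes f :: "real \<Rightarrow> complex"
  assumes "sm_on UNIV f"
  shows "sm_on UNIV (\<lambda>x. f (s * x + b))"
  unfolding sm_on_def sm_upto_def vderiv_affine[OF assms]
  using hasvd_affine[OF assms] differentiableI_vector by blast

lemma sm_on_shift:
  fixes f :: "real \<Rightarrow> complex"
  assumes "sm_on UNIV f"
  shows "sm_on UNIV (\<lambda>x. f (x + b))"
  using sm_on_affine[OF assms, of 1 b] by simp

lemma vderiv_shift:
  fixes f :: "real \<Rightarrow> complex"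
  assumes "sm_on UNIV f"
  shows "vderiv i (\<lambda>x. f (x + b)) x = vderiv i f (x + b)"
  using vderiv_affine[OF assms, of i 1 b] by simp

lemma vderiv_of_real: "vderiv (Suc i) (\<lambda>x. complex_of_real x) = (\<lambda>x. if i = 0 then 1 else 0)"
proof -
  have "vderiv 1 (\<lambda>x. complex_of_real x) = (\<lambda>x. 1)"
    using vector_derivative_at[OF has_vector_derivative_of_real[OF DERIV_ident]] by (simp add: fun_eq_iff)
  then show ?thesis by (simp only: vderiv_Suc'[of i] vderiv_const)
qed

lemma sm_on_of_real: "sm_on U (\<lambda>x. complex_of_real x)"
  unfolding sm_on_def sm_upto_def
proof (intro allI impI ballI)
  fix n i :: nat and x assume "i \<le> n" "x \<in> U"
  show "vderiv i (\<lambda>x. complex_of_real x) differentiable (at x)"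
  proof (cases i)
    case 0
    have "((\<lambda>x. complex_of_real x) has_vector_derivative 1) (at x)"
      using has_vector_derivative_of_real[OF DERIV_ident] by simp
    then show ?thesis using 0 differentiableI_vector by simp
  next
    case (Suc i') then show ?thesis by (simp add: vderiv_of_real)
  qed
qed

lemma sm_on_poly: "sm_on U (\<lambda>x. poly p (complex_of_real x))"
proof -
  have "sm_on UNIV (\<lambda>x. poly p (complex_of_real x))"
    by (rule sm_on_comp[of UNIV UNIV "poly p"]) (auto intro: sm_on_of_real poly_holomorphic_on)
  then show ?thesis using sm_on_subset by blast
qed

lemma vderiv1_poly: "vderiv 1 (\<lambda>x. poly p (complex_of_real x)) = (\<lambda>x. poly (pderiv p) (complex_of_real x))"
proof (rule ext)
  fix x
  show "vderiv 1 (\<lambda>x. poly p (complex_of_real x)) x = poly (pderiv p) (complex_of_real x)"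
    using vector_derivative_at[OF has_vector_derivative_real_field[OF poly_DERIV[of p "complex_of_real x"]]]
    by simp
qed

definition bnd :: "nat \<Rightarrow> (real \<Rightarrow> complex) \<Rightarrow> real \<Rightarrow> bool" where
  "bnd k h M \<longleftrightarrow> (\<forall>j\<le>k. \<forall>t\<in>{-real k..real k}. norm (vderiv j h t) \<le> M)"

lemma seminorm_le: "bnd k h M \<Longrightarrow> seminorm_p k h \<le> M"
  unfolding seminorm_p_def bnd_def
  by (intro cSUP_least) auto

lemma bnd_exists:
  assumes "sm_on UNIV h"
  shows "\<exists>M. bnd k h M"
proof -
  have "\<exists>M. \<forall>t\<in>{-real k..real k}. norm (vderiv j h t) \<le> M" for j
  proof -
    have "continuous_on {-real k..real k} (vderiv j h)"
      proof (intro continuous_at_imp_continuous_on ballI)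
      fix x show "isCont (vderiv j h) x"
        using differentiable_imp_continuous_within[OF sm_on_differentiable[OF assms, of x j]] by simp
    qed
    then have "bounded (vderiv j h ` {-real k..real k})"
      by (intro compact_imp_bounded compact_continuous_image) auto
    then show ?thesis by (auto simp: bounded_iff)
  qed
  then obtain Mf where Mf: "\<And>j t. t\<in>{-real k..real k} \<Longrightarrow> norm (vderiv j h t) \<le> Mf j" by metis
  have "bnd k h (\<Sum>j\<le>k. \<bar>Mf j\<bar>)"
    unfolding bnd_def
  proof (intro allI impI ballI)
    fix j t assume j: "j \<le> k" and t: "t \<in> {-real k..real k}"
    have "norm (vderiv j h t) \<le> \<bar>Mf j\<bar>" using Mf[OF t, of j] by linarith
    also have "\<dots> \<le> (\<Sum>j\<le>k. \<bar>Mf j\<bar>)"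
      using j by (intro member_le_sum) auto
    finally show "norm (vderiv j h t) \<le> (\<Sum>j\<le>k. \<bar>Mf j\<bar>)" .
  qed
  then show ?thesis by blast
qed

lemma prod_bound:
  fixes u v :: "real \<Rightarrow> complex"
  assumes "sm_on UNIV u" "sm_on UNIV v"
    and "\<And>i t. i \<le> j \<Longrightarrow> t \<in> I \<Longrightarrow> norm (vderiv i u t) \<le> A"
    and "\<And>i t. i \<le> j \<Longrightarrow> t \<in> I \<Longrightarrow> norm (vderiv i v t) \<le> B"
    and "t \<in> I"
  shows "norm (vderiv j (\<lambda>x. u x * v x) t) \<le> 2 ^ j * A * B"
  using assms
proof (induction j arbitrary: u v)
  case 0
  have a: "norm (u t) \<le> A" using "0.prems"(3)[of 0 t] "0.prems"(5) by simp
  have b: "norm (v t) \<le> B" using "0.prems"(4)[of 0 t] "0.prems"(5) by simp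
  have "norm (u t * v t) \<le> A * B"
  proof -
    have "0 \<le> A" using a norm_ge_zero order_trans by blast
    then show ?thesis unfolding norm_mult using mult_mono[OF a b] by simp
  qed
  then show ?case by simp
next
  case (Suc j)
  have A: "0 \<le> A" using Suc.prems(3)[of 0 t] Suc.prems(5) norm_ge_zero order_trans by blast
  have B: "0 \<le> B" using Suc.prems(4)[of 0 t] Suc.prems(5) norm_ge_zero order_trans by blast
  have du: "\<And>y. u differentiable (at y)" and dv: "\<And>y. v differentiable (at y)"
    using sm_on_differentiable[OF Suc.prems(1), of _ 0] sm_on_differentiable[OF Suc.prems(2), of _ 0] by auto
  have eq: "vderiv 1 (\<lambda>x. u x * v x) = (\<lambda>y. 1 * (u y * vderiv 1 v y) + 1 * (vderiv 1 u y * v y))"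
    using du dv by (simp add: fun_eq_iff)
  have s1: "sm_on UNIV (\<lambda>y. u y * vderiv 1 v y)"
    using sm_on_mult Suc.prems(1,2) sm_on_vderiv1 by blast
  have s2: "sm_on UNIV (\<lambda>y. vderiv 1 u y * v y)"
    using sm_on_mult Suc.prems(1,2) sm_on_vderiv1 by blast
  have "vderiv (Suc j) (\<lambda>x. u x * v x) t = vderiv j (vderiv 1 (\<lambda>x. u x * v x)) t"
    by (simp only: vderiv_Suc'[of j])
  also have "\<dots> = vderiv j (\<lambda>y. u y * vderiv 1 v y) t + vderiv j (\<lambda>y. vderiv 1 u y * v y) t"
    unfolding eq using vderiv_lin[of UNIV j _ _ j t 1 1] s1 s2 unfolding sm_on_def by simp
  finally have e: "vderiv (Suc j) (\<lambda>x. u x * v x) t =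
      vderiv j (\<lambda>y. u y * vderiv 1 v y) t + vderiv j (\<lambda>y. vderiv 1 u y * v y) t" .
  have b1: "norm (vderiv j (\<lambda>y. u y * vderiv 1 v y) t) \<le> 2 ^ j * A * B"
  proof (rule Suc.IH)
    show "sm_on UNIV u" "sm_on UNIV (vderiv 1 v)" using Suc.prems sm_on_vderiv1 by blast+
    show "\<And>i t. i \<le> j \<Longrightarrow> t \<in> I \<Longrightarrow> norm (vderiv i u t) \<le> A" using Suc.prems by simp
    show "\<And>i t. i \<le> j \<Longrightarrow> t \<in> I \<Longrightarrow> norm (vderiv i (vderiv 1 v) t) \<le> B"
      using Suc.prems(4) by (simp only: vderiv_Suc'[symmetric])
  qed (use Suc.prems in auto)
  have b2: "norm (vderiv j (\<lambda>y. vderiv 1 u y * v y) t) \<le> 2 ^ j * A * B"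
  proof (rule Suc.IH)
    show "sm_on UNIV (vderiv 1 u)" "sm_on UNIV v" using Suc.prems sm_on_vderiv1 by blast+
    show "\<And>i t. i \<le> j \<Longrightarrow> t \<in> I \<Longrightarrow> norm (vderiv i v t) \<le> B" using Suc.prems by simp
    show "\<And>i t. i \<le> j \<Longrightarrow> t \<in> I \<Longrightarrow> norm (vderiv i (vderiv 1 u) t) \<le> A"
      using Suc.prems(3) by (simp only: vderiv_Suc'[symmetric])
  qed (use Suc.prems in auto)
  show ?case unfolding e using b1 b2 norm_triangle_ineq[of "vderiv j (\<lambda>y. u y * vderiv 1 v y) t"
      "vderiv j (\<lambda>y. vderiv 1 u y * v y) t"] by simp
qed

lemma bnd_mult:
  fixes u v :: "real \<Rightarrow> complex"
  assumes "sm_on UNIV u" "sm_on UNIV v" "bnd k u A" "bnd k v B"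
  shows "bnd k (\<lambda>x. u x * v x) (2 ^ k * A * B)"
  unfolding bnd_def
proof (intro allI impI ballI)
  fix j t assume j: "j \<le> k" and t: "t \<in> {-real k..real k}"
  have A: "0 \<le> A" using assms(3) t unfolding bnd_def by (meson le0 norm_ge_zero order_trans)
  have B: "0 \<le> B" using assms(4) t unfolding bnd_def by (meson le0 norm_ge_zero order_trans)
  have "norm (vderiv j (\<lambda>x. u x * v x) t) \<le> 2 ^ j * A * B"
    using prod_bound[OF assms(1,2), of j "{-real k..real k}" A B t] assms(3,4) j t
    unfolding bnd_def by auto
  also have "\<dots> \<le> 2 ^ k * A * B"
    using A B j by (intro mult_right_mono) (auto intro: power_increasing)
  finally show "norm (vderiv j (\<lambda>x. u x * v x) t) \<le> 2 ^ k * A * B" .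
qed

lemma bnd_lin:
  fixes u v :: "real \<Rightarrow> complex"
  assumes "sm_on UNIV u" "sm_on UNIV v" "bnd k u A" "bnd k v B"
  shows "bnd k (\<lambda>x. a * u x + b * v x) (norm a * A + norm b * B)"
  unfolding bnd_def
proof (intro allI impI ballI)
  fix j t assume j: "j \<le> k" and t: "t \<in> {-real k..real k}"
  have "vderiv j (\<lambda>x. a * u x + b * v x) t = a * vderiv j u t + b * vderiv j v t"
    using vderiv_lin[of UNIV j u v j t a b] assms(1,2) unfolding sm_on_def by simp
  also have "norm \<dots> \<le> norm a * A + norm b * B"
  proof -
    have "norm (vderiv j u t) \<le> A" "norm (vderiv j v t) \<le> B" using assms(3,4) j t unfolding bnd_def by auto
    then have "norm a * norm (vderiv j u t) \<le> norm a * A" "norm b * norm (vderiv j v t) \<le> norm b * B"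
      by (auto intro: mult_left_mono)
    then show ?thesis using norm_triangle_ineq[of "a * vderiv j u t" "b * vderiv j v t"]
      unfolding norm_mult by linarith
  qed
  finally show "norm (vderiv j (\<lambda>x. a * u x + b * v x) t) \<le> norm a * A + norm b * B" .
qed

lemma bnd_mono: "bnd k u A \<Longrightarrow> A \<le> B \<Longrightarrow> bnd k u B"
  unfolding bnd_def by force


definition Gf :: "real poly \<Rightarrow> real \<Rightarrow> real" where
  "Gf Q s = (if s > 0 then poly Q (1/s) * exp (-1/s) else 0)"

definition Rp :: "real poly \<Rightarrow> real poly" where
  "Rp Q = [:0,0,1:] * (Q - pderiv Q)"

lemma poly_exp_lim_top:
  fixes Q :: "real poly"
  shows "((\<lambda>u. poly Q u * exp (- u)) \<longlongrightarrow> 0) at_top"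
proof -
  have "((\<lambda>u. \<Sum>i\<le>degree Q. coeff Q i * (u ^ i / exp u)) \<longlongrightarrow> (\<Sum>i\<le>degree Q. coeff Q i * 0)) at_top"
    by (intro tendsto_sum tendsto_mult tendsto_const tendsto_power_div_exp_0)
  moreover have "\<And>u. poly Q u * exp (-u) = (\<Sum>i\<le>degree Q. coeff Q i * (u^i / exp u))"
    by (simp add: poly_altdef sum_distrib_right exp_minus divide_inverse mult.assoc)
  ultimately show ?thesis by simp
qed

lemma poly_exp_lim_right:
  fixes Q :: "real poly"
  shows "((\<lambda>x. poly Q (1/x) * exp (-1/x)) \<longlongrightarrow> 0) (at_right (0::real))"
proof -
  have "((\<lambda>x. poly Q (inverse x) * exp (- inverse x)) \<longlongrightarrow> 0) (at_right (0::real))"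
    by (rule filterlim_compose[OF poly_exp_lim_top filterlim_inverse_at_top_right])
  then show ?thesis by (simp add: divide_inverse)
qed

lemma Gf_deriv_pos:
  fixes Q :: "real poly"
  assumes "s > 0"
  shows "((\<lambda>s. poly Q (1/s) * exp (-1/s)) has_real_derivative (poly (Rp Q) (1/s) * exp (-1/s))) (at s)"
proof -
  have "((\<lambda>s. poly Q (1/s) * exp (-1/s)) has_real_derivative
      (poly (pderiv Q) (1/s) * (- 1 / s^2) * exp (-1/s) + poly Q (1/s) * (exp (-1/s) * (1/s^2)))) (at s)"
    using assms
    by (auto intro!: derivative_eq_intros DERIV_chain2[OF poly_DERIV] simp: field_simps power2_eq_square)
  moreover have "poly (pderiv Q) (1/s) * (- 1 / s^2) * exp (-1/s) + poly Q (1/s) * (exp (-1/s) * (1/s^2))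
      = poly (Rp Q) (1/s) * exp (-1/s)"
    by (simp add: Rp_def algebra_simps power2_eq_square)
  ultimately show ?thesis by simp
qed

lemma Gf_deriv: "(Gf Q has_real_derivative Gf (Rp Q) s) (at s)"
proof (cases "s > 0")
  case True
  have "((\<lambda>s. poly Q (1/s) * exp (-1/s)) has_real_derivative Gf (Rp Q) s) (at s)"
    using Gf_deriv_pos[OF True] True by (simp add: Gf_def)
  then show ?thesis
    by (rule has_field_derivative_transform_within_open[of _ _ _ "{0<..}"]) (use True in \<open>auto simp: Gf_def\<close>)
next
  case False
  show ?thesis
  proof (cases "s < 0")
    case True
    have "((\<lambda>s. 0) has_real_derivative Gf (Rp Q) s) (at s)"
      using True by (simp add: Gf_def)
    then show ?thesis
      by (rule has_field_derivative_transform_within_open[of _ _ _ "{..<0}"]) (use True in \<open>auto simp: Gf_def\<close>)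
  next
    case False
    with \<open>\<not> s > 0\<close> have s: "s = 0" by simp
    have "((\<lambda>y. (Gf Q y - Gf Q 0) / (y - 0)) \<longlongrightarrow> 0) (at 0)"
    proof (rule filterlim_split_at)
      show "((\<lambda>y. (Gf Q y - Gf Q 0) / (y - 0)) \<longlongrightarrow> 0) (at_left (0::real))"
      proof (rule tendsto_eventually)
        show "\<forall>\<^sub>F y in at_left 0. (Gf Q y - Gf Q 0) / (y - 0) = 0"
          by (auto simp: Gf_def eventually_at_left_field intro!: exI[of _ "-1"])
      qed
      have "((\<lambda>x. poly (pCons 0 Q) (1/x) * exp (-1/x)) \<longlongrightarrow> 0) (at_right (0::real))"
        by (rule poly_exp_lim_right)
      then show "((\<lambda>y. (Gf Q y - Gf Q 0) / (y - 0)) \<longlongrightarrow> 0) (at_right (0::real))"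
      proof (rule Lim_transform_eventually)
        show "\<forall>\<^sub>F x in at_right 0. poly (pCons 0 Q) (1 / x) * exp (- 1 / x) = (Gf Q x - Gf Q 0) / (x - 0)"
          by (auto simp: Gf_def eventually_at_right_field intro!: exI[of _ 1])
      qed
    qed
    then show ?thesis using s by (simp add: has_field_derivative_iff Gf_def)
  qed
qed

definition Psi :: "real poly \<Rightarrow> real \<Rightarrow> complex" where
  "Psi Q s = complex_of_real (Gf Q s)"

lemma Psi_hasvd: "(Psi Q has_vector_derivative Psi (Rp Q) s) (at s)"
  unfolding Psi_def[abs_def] by (rule has_vector_derivative_of_real[OF Gf_deriv])

lemma vderiv_Psi: "vderiv i (Psi Q) = Psi ((Rp ^^ i) Q)"
proof (induction i arbitrary: Q)
  case 0 then show ?case by simp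
next
  case (Suc i)
  have "vderiv 1 (Psi Q) = Psi (Rp Q)"
    using vector_derivative_at[OF Psi_hasvd] by (simp add: fun_eq_iff)
  then show ?case using Suc by (simp only: vderiv_Suc'[of i] funpow_Suc_right o_apply)
qed

lemma sm_on_Psi: "sm_on U (Psi Q)"
  unfolding sm_on_def sm_upto_def vderiv_Psi
  using Psi_hasvd differentiableI_vector by blast

definition psi1 :: "real \<Rightarrow> complex" where "psi1 = Psi 1"

lemma psi1_zero: "s \<le> 0 \<Longrightarrow> psi1 s = 0"
  by (simp add: psi1_def Psi_def Gf_def)

lemma psi1_pos: "s > 0 \<Longrightarrow> Re (psi1 s) > 0 \<and> Im (psi1 s) = 0"
  by (simp add: psi1_def Psi_def Gf_def)

definition step :: "real \<Rightarrow> complex" where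
  "step s = psi1 s * inverse (psi1 s + psi1 (1 - s))"

lemma step_den_nz: "psi1 s + psi1 (1 - s) \<noteq> 0"
proof (cases "s > 0")
  case True
  then have "Re (psi1 s) > 0" using psi1_pos by blast
  moreover have "Re (psi1 (1 - s)) \<ge> 0"
    using psi1_pos[of "-1 * s + 1"] psi1_zero[of "-1 * s + 1"] by (cases "-1 * s + 1 > 0") auto
  ultimately show ?thesis by (metis add_pos_nonneg order_less_irrefl plus_complex.sel(1) zero_complex.sel(1))
next
  case False
  then have "Re (psi1 (1 - s)) > 0" using psi1_pos by simp
  then show ?thesis using psi1_zero[of s] False by auto
qed

lemma sm_on_step: "sm_on UNIV step"
proof -
  have s1: "sm_on UNIV psi1" by (simp add: psi1_def sm_on_Psi)
  have s2: "sm_on UNIV (\<lambda>s. psi1 (1 - s))" using sm_on_affine[OF s1, of "-1" 1] by simp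
  have s3: "sm_on UNIV (\<lambda>s. psi1 s + psi1 (1 - s))" using sm_on_add[OF _ s1 s2] by simp
  have s4: "sm_on UNIV (\<lambda>s. inverse (psi1 s + psi1 (1 - s)))"
    apply (rule sm_on_comp[of UNIV "-{0}" inverse])
    using s3 step_den_nz by (auto intro: holomorphic_intros)
  show ?thesis unfolding step_def[abs_def] using sm_on_mult[OF _ s1 s4] by simp
qed

lemma step_0: "s \<le> 0 \<Longrightarrow> step s = 0"
  by (simp add: step_def psi1_zero)

lemma step_1: "s \<ge> 1 \<Longrightarrow> step s = 1"
proof -
  assume "s \<ge> 1"
  then have "psi1 (1 - s) = 0" by (simp add: psi1_zero)
  moreover have "psi1 s \<noteq> 0" using psi1_pos[of s] \<open>s \<ge> 1\<close> by auto
  ultimately show "step s = 1" by (simp add: step_def)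
qed

definition bump :: "real \<Rightarrow> complex" where
  "bump x = step (2 - x) * step (x + 2)"

lemma sm_on_bump: "sm_on UNIV bump"
proof -
  have "sm_on UNIV (\<lambda>x. step (2 - x))" using sm_on_affine[OF sm_on_step, of "-1" 2] by simp
  moreover have "sm_on UNIV (\<lambda>x. step (x + 2))" using sm_on_affine[OF sm_on_step, of 1 2] by simp
  ultimately show ?thesis unfolding bump_def[abs_def] using sm_on_mult by blast
qed

lemma bump_1: "\<bar>x\<bar> \<le> 1 \<Longrightarrow> bump x = 1"
  by (simp add: bump_def step_1)

lemma bump_0: "\<bar>x\<bar> \<ge> 2 \<Longrightarrow> bump x = 0"
  by (auto simp: bump_def step_0 abs_if split: if_splits)


definition Qi :: "complex set" where "Qi = {c. Re c \<in> \<rat> \<and> Im c \<in> \<rat>}"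

lemma Qi_add: "a \<in> Qi \<Longrightarrow> b \<in> Qi \<Longrightarrow> a + b \<in> Qi"
  by (auto simp: Qi_def)
lemma Qi_mult: "a \<in> Qi \<Longrightarrow> b \<in> Qi \<Longrightarrow> a * b \<in> Qi"
  by (auto simp: Qi_def)
lemma Qi_0: "0 \<in> Qi" by (auto simp: Qi_def)
lemma Qi_1: "1 \<in> Qi" by (auto simp: Qi_def)
lemma Qi_of_nat: "of_nat n \<in> Qi" by (auto simp: Qi_def)
lemma Qi_of_real: "r \<in> \<rat> \<Longrightarrow> complex_of_real r \<in> Qi" by (auto simp: Qi_def)
lemma Qi_div_nat: "a \<in> Qi \<Longrightarrow> a / of_nat n \<in> Qi"
  by (auto simp: Qi_def Re_divide Im_divide)
lemma Qi_neg: "a \<in> Qi \<Longrightarrow> - a \<in> Qi" by (auto simp: Qi_def)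
lemma Qi_sum: "(\<And>i. i \<in> A \<Longrightarrow> f i \<in> Qi) \<Longrightarrow> sum f A \<in> Qi"
  by (induction A rule: infinite_finite_induct) (auto intro: Qi_add Qi_0)

lemma Qi_dense: "e > 0 \<Longrightarrow> \<exists>r\<in>Qi. norm (r - c) \<le> e"
proof -
  assume e: "e > 0"
  obtain a where a: "a \<in> \<rat>" "Re c < a" "a < Re c + e/2" using Rats_dense_in_real[of "Re c" "Re c + e/2"] e by auto
  obtain b where b: "b \<in> \<rat>" "Im c < b" "b < Im c + e/2" using Rats_dense_in_real[of "Im c" "Im c + e/2"] e by auto
  let ?r = "Complex a b"
  have "?r \<in> Qi" using a b by (simp add: Qi_def)
  moreover have "norm (?r - c) \<le> e"
    using cmod_le[of "?r - c"] a b by simp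
  ultimately show ?thesis by blast
qed

definition RQ :: "complex poly \<Rightarrow> bool" where "RQ p \<longleftrightarrow> (\<forall>i. coeff p i \<in> Qi)"

lemma RQ_add: "RQ p \<Longrightarrow> RQ q \<Longrightarrow> RQ (p + q)"
  by (simp add: RQ_def Qi_add)
lemma RQ_mult: "RQ p \<Longrightarrow> RQ q \<Longrightarrow> RQ (p * q)"
  unfolding RQ_def coeff_mult by (auto intro!: Qi_sum Qi_mult)
lemma RQ_const: "c \<in> Qi \<Longrightarrow> RQ [:c:]"
  by (auto simp: RQ_def coeff_pCons Qi_0 split: nat.splits)
lemma RQ_pCons: "c \<in> Qi \<Longrightarrow> RQ p \<Longrightarrow> RQ (pCons c p)"
  by (auto simp: RQ_def coeff_pCons split: nat.splits)
lemma RQ_smult: "c \<in> Qi \<Longrightarrow> RQ p \<Longrightarrow> RQ (smult c p)"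
  by (simp add: RQ_def Qi_mult)
lemma RQ_monom: "c \<in> Qi \<Longrightarrow> RQ (monom c n)"
  by (simp add: RQ_def coeff_monom Qi_0)
lemma RQ_0: "RQ 0" by (simp add: RQ_def Qi_0)
lemma RQ_sum: "(\<And>i. i \<in> A \<Longrightarrow> RQ (f i)) \<Longrightarrow> RQ (sum f A)"
  by (induction A rule: infinite_finite_induct) (auto intro: RQ_add RQ_0)
lemma RQ_1: "RQ 1" by (metis RQ_const Qi_1 one_pCons)
lemma RQ_power: "RQ p \<Longrightarrow> RQ (p ^ n)"
  by (induction n) (auto intro: RQ_mult RQ_1)
lemma RQ_diff: "RQ p \<Longrightarrow> RQ q \<Longrightarrow> RQ (p - q)"
  by (simp add: RQ_def Qi_def)

definition pint :: "complex poly \<Rightarrow> complex poly" where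
  "pint p = (\<Sum>i\<le>degree p. monom (coeff p i / of_nat (Suc i)) (Suc i))"

lemma pderiv_sum': "pderiv (sum f A) = (\<Sum>x\<in>A. pderiv (f x))"
  using higher_pderiv_sum[of 1 f A] by simp

lemma pderiv_pint: "pderiv (pint p) = p"
proof -
  have "pderiv (pint p) = (\<Sum>i\<le>degree p. monom (coeff p i) i)"
    unfolding pint_def pderiv_sum' pderiv_monom
    by (intro sum.cong refl) (simp del: of_nat_Suc)
  then show ?thesis by (simp add: poly_as_sum_of_monoms)
qed

lemma RQ_pint: "RQ p \<Longrightarrow> RQ (pint p)"
  unfolding pint_def by (intro RQ_sum RQ_monom Qi_div_nat) (simp add: RQ_def)

lemma poly_pint_0: "poly (pint p) 0 = 0"
  by (simp add: pint_def poly_monom poly_sum)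

lemma mvt_bound:
  fixes F :: "real \<Rightarrow> complex"
  assumes "\<And>x. x \<in> {a..b} \<Longrightarrow> (F has_vector_derivative D x) (at x)"
    and "\<And>x. x \<in> {a..b} \<Longrightarrow> norm (D x) \<le> B"
    and "x \<in> {a..b}" "y \<in> {a..b}"
  shows "norm (F x - F y) \<le> B * \<bar>x - y\<bar>"
proof -
  have "norm (F x - F y) \<le> B * norm (x - y)"
  proof (rule differentiable_bound[of "{a..b}" F "\<lambda>x h. h *\<^sub>R D x"])
    show "convex {a..b}" by simp
    show "(F has_derivative (\<lambda>h. h *\<^sub>R D x)) (at x within {a..b})" if "x \<in> {a..b}" for x
      using assms(1)[OF that] unfolding has_vector_derivative_def by (rule has_derivative_at_withinI)
    show "onorm (\<lambda>h. h *\<^sub>R D x) \<le> B" if "x \<in> {a..b}" for x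
      using onorm_scaleR_left[OF bounded_linear_ident, of "D x"] onorm_id[where 'a=real] assms(2)[OF that] by simp
  qed (use assms in auto)
  then show ?thesis by simp
qed

lemma bern_approx:
  fixes h :: "real \<Rightarrow> complex"
  assumes cont: "continuous_on {-L..L} h" and L: "L > 0" "L \<in> \<rat>" and e: "e > 0"
  shows "\<exists>p. RQ p \<and> (\<forall>x\<in>{-L..L}. norm (poly p (of_real x) - h x) \<le> e)"
proof -
  define g where "g s = h (-L + 2 * L * s)" for s
  have sub: "(\<lambda>s. -L + 2 * L * s) ` {0..1} \<subseteq> {-L..L}"
  proof
    fix y assume "y \<in> (\<lambda>s. -L + 2 * L * s) ` {0..1}"
    then obtain s where s: "s \<in> {0..1}" "y = -L + 2 * L * s" by auto
    have "0 \<le> L * s" "L * s \<le> L" using s L by (auto simp: mult_left_le)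
    then show "y \<in> {-L..L}" using s by auto
  qed
  have cg: "continuous_on {0..1} g"
    unfolding g_def
    by (rule continuous_on_compose2[OF cont _ sub]) (auto intro!: continuous_intros)
  have c1: "continuous_on {0..1} (\<lambda>s. Re (g s))" by (intro continuous_intros cg)
  have c2: "continuous_on {0..1} (\<lambda>s. Im (g s))" by (intro continuous_intros cg)
  obtain N1 where N1: "\<And>n x. N1 \<le> n \<and> x \<in> {0..1} \<Longrightarrow>
      \<bar>Re (g x) - (\<Sum>k\<le>n. Re (g (k/n)) * Bernstein n k x)\<bar> < e/3"
    using Bernstein_Weierstrass[OF c1, of "e/3"] e by auto
  obtain N2 where N2: "\<And>n x. N2 \<le> n \<and> x \<in> {0..1} \<Longrightarrow>
      \<bar>Im (g x) - (\<Sum>k\<le>n. Im (g (k/n)) * Bernstein n k x)\<bar> < e/3"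
    using Bernstein_Weierstrass[OF c2, of "e/3"] e by auto
  define n where "n = max N1 N2"
  have "\<forall>i::nat. \<exists>r\<in>Qi. norm (r - g (i/n)) \<le> e/3"
  proof
    fix i :: nat show "\<exists>r\<in>Qi. norm (r - g (i/n)) \<le> e/3" using Qi_dense[of "e/3" "g (i/n)"] e by simp
  qed
  then obtain r where r: "\<And>i::nat. r i \<in> Qi" "\<And>i::nat. norm (r i - g (i/n)) \<le> e/3" by metis
  define S :: "complex poly" where "S = [:1/2, 1/(2 * of_real L):]"
  define BP where "BP i = smult (of_nat (n choose i)) (S ^ i * (1 - S) ^ (n - i))" for i
  define P where "P = (\<Sum>i\<le>n. smult (r i) (BP i))"
  have RQS: "RQ S" unfolding S_def
    by (intro RQ_pCons RQ_0 Qi_div_nat) (auto simp: Qi_def L Re_divide Im_divide)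
  have RQP: "RQ P" unfolding P_def BP_def
    by (intro RQ_sum RQ_smult RQ_mult RQ_power RQ_diff RQ_1 Qi_of_nat RQS r)
  have polyS: "poly S (of_real x) = of_real ((x + L) / (2 * L))" for x
    using L by (simp add: S_def field_simps)
  have polyBP: "poly (BP i) (of_real x) = of_real (Bernstein n i ((x + L) / (2 * L)))" for i x
    by (simp add: BP_def Bernstein_def polyS)
  have "norm (poly P (of_real x) - h x) \<le> e" if x: "x \<in> {-L..L}" for x
  proof -
    define s where "s = (x + L) / (2 * L)"
    have s01: "s \<in> {0..1}" using x L by (auto simp: s_def field_simps)
    have hx: "h x = g s" using L by (simp add: g_def s_def field_simps)
    have pP: "poly P (of_real x) = (\<Sum>i\<le>n. r i * of_real (Bernstein n i s))"
      by (simp add: P_def poly_sum polyBP s_def)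
    have "norm (poly P (of_real x) - h x) \<le>
        norm (\<Sum>i\<le>n. (r i - g (i/n)) * of_real (Bernstein n i s)) +
        norm ((\<Sum>i\<le>n. g (i/n) * of_real (Bernstein n i s)) - g s)"
      unfolding pP hx by (rule order_trans[OF _ norm_triangle_ineq]) (simp add: algebra_simps sum_subtractf)
    also have "norm (\<Sum>i\<le>n. (r i - g (i/n)) * of_real (Bernstein n i s)) \<le> e/3"
    proof -
      have "norm (\<Sum>i\<le>n. (r i - g (i/n)) * of_real (Bernstein n i s)) \<le>
            (\<Sum>i\<le>n. e/3 * Bernstein n i s)"
      proof (rule order_trans[OF norm_sum sum_mono])
        fix i assume "i \<in> {..n}"
        have "0 \<le> Bernstein n i s" using Bernstein_nonneg[of s n] s01 by auto
        then show "norm ((r i - g (i/n)) * of_real (Bernstein n i s)) \<le> e/3 * Bernstein n i s"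
          unfolding norm_mult using mult_right_mono[OF r(2)[of i]] by simp
      qed
      also have "\<dots> = e/3 * (\<Sum>i\<le>n. Bernstein n i s)" by (rule sum_distrib_left[symmetric])
      also have "\<dots> = e/3" by simp
      finally show ?thesis .
    qed
    also have "norm ((\<Sum>i\<le>n. g (i/n) * of_real (Bernstein n i s)) - g s) \<le> e/3 + e/3"
    proof -
      have "norm ((\<Sum>i\<le>n. g (i/n) * of_real (Bernstein n i s)) - g s) \<le>
          \<bar>Re ((\<Sum>i\<le>n. g (i/n) * of_real (Bernstein n i s)) - g s)\<bar> +
          \<bar>Im ((\<Sum>i\<le>n. g (i/n) * of_real (Bernstein n i s)) - g s)\<bar>"
        by (rule cmod_le)
      also have "\<dots> \<le> e/3 + e/3"
        using N1[of n s] N2[of n s] s01 by (simp add: n_def Re_sum Im_sum abs_minus_commute)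
      finally show ?thesis .
    qed
    finally show ?thesis by simp
  qed
  then show ?thesis using RQP by blast
qed

lemma poly_dense_m:
  assumes L: "L > 0" "L \<in> \<rat>"
  shows "\<forall>w. sm_on UNIV w \<longrightarrow> (\<forall>\<delta>>0. \<exists>p. RQ p \<and>
     (\<forall>j\<le>m. \<forall>t\<in>{-L..L}. norm (vderiv j (\<lambda>x. poly p (of_real x) - w x) t) \<le> \<delta>))"
proof (induction m)
  case 0
  show ?case
  proof (intro allI impI)
    fix w :: "real \<Rightarrow> complex" and \<delta> :: real assume w: "sm_on UNIV w" and d: "\<delta> > 0"
    have "continuous_on {-L..L} w"
    proof (intro continuous_at_imp_continuous_on ballI)
      fix x show "isCont w x"
        using differentiable_imp_continuous_within[OF sm_on_differentiable[OF w, of x 0]] by simp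
    qed
    then obtain p where "RQ p" "\<forall>x\<in>{-L..L}. norm (poly p (of_real x) - w x) \<le> \<delta>"
      using bern_approx[OF _ L d] by blast
    then show "\<exists>p. RQ p \<and> (\<forall>j\<le>0. \<forall>t\<in>{-L..L}. norm (vderiv j (\<lambda>x. poly p (of_real x) - w x) t) \<le> \<delta>)"
      by auto
  qed
next
  case (Suc m)
  show ?case
  proof (intro allI impI)
    fix w :: "real \<Rightarrow> complex" and \<delta> :: real assume w: "sm_on UNIV w" and d: "\<delta> > 0"
    define \<delta>' where "\<delta>' = \<delta> / (2 * (L + 1))"
    have d': "\<delta>' > 0" using d L by (simp add: \<delta>'_def)
    obtain q where q: "RQ q" "\<And>j t. j \<le> m \<Longrightarrow> t \<in> {-L..L} \<Longrightarrow>
        norm (vderiv j (\<lambda>x. poly q (of_real x) - vderiv 1 w x) t) \<le> \<delta>'"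
      using Suc.IH sm_on_vderiv1[OF w] d' by blast
    obtain r where r: "r \<in> Qi" "norm (r - w 0) \<le> \<delta>/2" using Qi_dense[of "\<delta>/2" "w 0"] d by auto
    define P where "P = [:r:] + pint q"
    have RQP: "RQ P" unfolding P_def by (intro RQ_add RQ_const r RQ_pint q)
    have pdP: "pderiv P = q" by (simp add: P_def pderiv_add pderiv_pint)
    define F where "F x = poly P (of_real x) - w x" for x
    have sF: "sm_on UNIV F" unfolding F_def[abs_def] by (intro sm_on_diff sm_on_poly w) auto
    have dF: "vderiv 1 F = (\<lambda>x. poly q (of_real x) - vderiv 1 w x)"
    proof
      fix x
      have "vderiv 1 F x = vderiv 1 (\<lambda>x. poly P (of_real x)) x - vderiv 1 w x"
        unfolding F_def[abs_def]
        using vderiv_diff[of UNIV 0 "\<lambda>x. poly P (of_real x)" w 1 x] sm_on_poly[of UNIV P] w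
        unfolding sm_on_def by simp
      then show "vderiv 1 F x = poly q (of_real x) - vderiv 1 w x"
        by (simp only: vderiv1_poly pdP)
    qed
    have "\<forall>j\<le>Suc m. \<forall>t\<in>{-L..L}. norm (vderiv j F t) \<le> \<delta>"
    proof (intro allI impI ballI)
      fix j t assume j: "j \<le> Suc m" and t: "t \<in> {-L..L}"
      show "norm (vderiv j F t) \<le> \<delta>"
      proof (cases j)
        case (Suc j')
        have "vderiv j F t = vderiv j' (\<lambda>x. poly q (of_real x) - vderiv 1 w x) t"
          using Suc by (simp only: vderiv_Suc' dF)
        also have "norm \<dots> \<le> \<delta>'" using q(2)[of j' t] Suc j t by simp
        also have "\<delta>' \<le> \<delta>" using d L by (simp add: \<delta>'_def field_simps)
        finally show ?thesis .
      next
        case 0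
        have hv: "(F has_vector_derivative vderiv 1 F x) (at x)" for x
          using vector_derivative_works[THEN iffD1, OF sm_on_differentiable[OF sF, of x 0]] by simp
        have "norm (F t - F 0) \<le> \<delta>' * \<bar>t - 0\<bar>"
        proof (rule mvt_bound[OF hv])
          show "norm (vderiv 1 F x) \<le> \<delta>'" if "x \<in> {-L..L}" for x
            using q(2)[of 0 x] that dF by (auto simp: fun_eq_iff)
        qed (use t L in auto)
        moreover have "F 0 = r - w 0" by (simp add: F_def P_def poly_pint_0)
        moreover have "\<delta>' * \<bar>t\<bar> \<le> \<delta> / 2"
        proof -
          have "\<bar>t\<bar> \<le> L" using t by auto
          then have "\<delta>' * \<bar>t\<bar> \<le> \<delta>' * L" using d' by (intro mult_left_mono) auto
          also have "\<dots> \<le> \<delta> / 2" using d L by (simp add: \<delta>'_def field_simps)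
          finally show ?thesis .
        qed
        ultimately have "norm (F t) \<le> \<delta>" using r(2) norm_triangle_ineq[of "F t - F 0" "F 0"] by simp
        then show ?thesis using 0 by simp
      qed
    qed
    then show "\<exists>p. RQ p \<and> (\<forall>j\<le>Suc m. \<forall>t\<in>{-L..L}. norm (vderiv j (\<lambda>x. poly p (of_real x) - w x) t) \<le> \<delta>)"
      using RQP unfolding F_def[abs_def] by blast
  qed
qed

lemma poly_dense:
  assumes "sm_on UNIV w" "\<delta> > 0"
  shows "\<exists>p. RQ p \<and> bnd k (\<lambda>x. poly p (of_real x) - w x) \<delta>"
proof -
  have L: "real k + 1 > 0" "real k + 1 \<in> \<rat>" by auto
  obtain p where "RQ p" "\<forall>j\<le>k. \<forall>t\<in>{-(real k + 1)..real k + 1}. norm (vderiv j (\<lambda>x. poly p (of_real x) - w x) t) \<le> \<delta>"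
    using poly_dense_m[OF L, of k] assms by blast
  then show ?thesis unfolding bnd_def by auto
qed


lemma sm_on_locally:
  fixes f :: "real \<Rightarrow> complex"
  assumes "\<And>x. \<exists>U g. open U \<and> x \<in> U \<and> sm_on UNIV g \<and> (\<forall>y\<in>U. f y = g y)"
  shows "sm_on UNIV f"
  unfolding sm_on_def sm_upto_def
proof (intro allI impI ballI)
  fix n j x assume "j \<le> (n::nat)"
  obtain U g where U: "open U" "x \<in> U" "sm_on UNIV g" "\<forall>y\<in>U. f y = g y" using assms by blast
  have eq: "\<And>y. y \<in> U \<Longrightarrow> vderiv j g y = vderiv j f y"
    using vderiv_local[of U g f] U by metis
  show "vderiv j f differentiable (at x)"
    using differentiable_local[of U "vderiv j g" "vderiv j f" x] eq U(1,2) sm_on_differentiable[OF U(3)] by blast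
qed

definition polyOf :: "(rat \<times> rat) list \<Rightarrow> complex poly" where
  "polyOf cs = Poly (map (\<lambda>(a, b). Complex (of_rat a) (of_rat b)) cs)"

lemma RQ_polyOf:
  assumes "RQ p"
  shows "\<exists>cs. polyOf cs = p"
proof -
  have "\<forall>c\<in>set (coeffs p). \<exists>ab. (\<lambda>(a, b). Complex (of_rat a) (of_rat b)) ab = c"
  proof
    fix c assume "c \<in> set (coeffs p)"
    then obtain n where "n < length (coeffs p)" "c = coeffs p ! n" by (auto simp: in_set_conv_nth)
    then have "c = coeff p n" by (cases "p = 0") (auto simp: coeffs_nth length_coeffs)
    then have "c \<in> Qi" using assms unfolding RQ_def by simp
    then obtain a b where "Re c = of_rat a" "Im c = of_rat b" unfolding Qi_def Rats_def by auto
    then show "\<exists>ab. (\<lambda>(a, b). Complex (of_rat a) (of_rat b)) ab = c" by (intro exI[of _ "(a,b)"]) (simp add: complex_eq_iff)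
  qed
  then obtain h where h: "\<forall>c\<in>set (coeffs p). (\<lambda>(a, b). Complex (of_rat a) (of_rat b)) (h c) = c"
    by (rule bchoice[THEN exE]) blast
  have "map (\<lambda>c. (\<lambda>(a, b). Complex (of_rat a) (of_rat b)) (h c)) (coeffs p) = coeffs p"
    by (rule map_idI) (use h in blast)
  then have "map (\<lambda>(a, b). Complex (of_rat a) (of_rat b)) (map h (coeffs p)) = coeffs p"
    by (simp add: o_def)
  then have "polyOf (map h (coeffs p)) = p" by (simp add: polyOf_def)
  then show ?thesis by blast
qed

context
  fixes a :: real
  assumes a: "a \<noteq> 0"
begin

definition en :: "nat \<Rightarrow> nat \<times> (rat \<times> rat) list" where "en i = from_nat i"
definition mm :: "nat \<Rightarrow> nat" where "mm i = Suc (fst (en i))"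
definition PP :: "nat \<Rightarrow> complex poly" where "PP i = polyOf (snd (en i))"
definition blk :: "nat \<Rightarrow> real \<Rightarrow> complex" where
  "blk i x = bump (x / real (mm i)) * poly (PP i) (of_real x)"
definition NN :: "nat \<Rightarrow> nat" where "NN i = nat \<lceil>(2 * real (mm i) + 2) / \<bar>a\<bar>\<rceil> + 1"
definition nn :: "nat \<Rightarrow> nat" where "nn i = (\<Sum>l<i. 2 * NN l) + NN i"
definition cc :: "nat \<Rightarrow> real" where "cc i = real (nn i) * a"
definition rad :: "nat \<Rightarrow> real" where "rad i = real (NN i) * \<bar>a\<bar>"
definition ff :: "real \<Rightarrow> complex" where
  "ff x = (if \<exists>i. \<bar>x - cc i\<bar> < rad i then blk (SOME i. \<bar>x - cc i\<bar> < rad i) (x - cc (SOME i. \<bar>x - cc i\<bar> < rad i)) else 0)"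

lemma rad_ge: "rad i \<ge> 2 * real (mm i) + 2"
proof -
  have "real (NN i) \<ge> (2 * real (mm i) + 2) / \<bar>a\<bar>"
    unfolding NN_def by linarith
  then show ?thesis using a by (simp add: rad_def field_simps)
qed

lemma sm_blk: "sm_on UNIV (blk i)"
proof -
  have "sm_on UNIV (\<lambda>x. bump ((1 / real (mm i)) * x + 0))" by (rule sm_on_affine[OF sm_on_bump])
  then have "sm_on UNIV (\<lambda>x. bump (x / real (mm i)))" by simp
  then show ?thesis unfolding blk_def[abs_def] using sm_on_mult[OF _ _ sm_on_poly] by blast
qed

lemma blk_zero: "\<bar>x\<bar> \<ge> 2 * real (mm i) \<Longrightarrow> blk i x = 0"
  unfolding blk_def by (rule mult_eq_0_iff[THEN iffD2], rule disjI1, rule bump_0) (simp add: mm_def field_simps abs_divide)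

lemma blk_poly: "\<bar>x\<bar> \<le> real (mm i) \<Longrightarrow> blk i x = poly (PP i) (of_real x)"
  unfolding blk_def using bump_1[of "x / real (mm i)"] by (simp add: mm_def field_simps abs_divide)

lemma nn_gap:
  assumes "i < j"
  shows "real (nn j) - real (nn i) \<ge> real (NN i) + real (NN j)"
proof -
  have "(\<Sum>l<j. 2 * NN l) = (\<Sum>l<i. 2 * NN l) + (\<Sum>l\<in>{i..<j}. 2 * NN l)"
    using assms by (metis less_imp_le_nat sum.atLeastLessThan_concat lessThan_atLeast0 zero_le)
  moreover have "(\<Sum>l\<in>{i..<j}. 2 * NN l) \<ge> 2 * NN i"
    using assms by (intro member_le_sum) auto
  ultimately have "nn j \<ge> nn i + NN i + NN j" unfolding nn_def by linarith
  then show ?thesis by linarith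
qed

lemma regions_disjoint:
  assumes "\<bar>x - cc i\<bar> < rad i" "\<bar>x - cc j\<bar> < rad j"
  shows "i = j"
proof (rule ccontr)
  assume "i \<noteq> j"
  have e1: "cc i - cc j = (real (nn i) - real (nn j)) * a" by (simp add: cc_def algebra_simps)
  have e2: "\<bar>real (nn i) - real (nn j)\<bar> \<ge> real (NN i) + real (NN j)"
  proof (cases "i < j")
    case True then show ?thesis using nn_gap[of i j] by linarith
  next
    case False then have "j < i" using \<open>i \<noteq> j\<close> by simp
    then show ?thesis using nn_gap[of j i] by linarith
  qed
  have dist: "\<bar>cc i - cc j\<bar> \<ge> rad i + rad j"
  proof -
    have "\<bar>cc i - cc j\<bar> = \<bar>real (nn i) - real (nn j)\<bar> * \<bar>a\<bar>" unfolding e1 by (simp add: abs_mult)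
    also have "\<dots> \<ge> (real (NN i) + real (NN j)) * \<bar>a\<bar>" using e2 by (intro mult_right_mono) auto
    finally show ?thesis by (simp add: rad_def algebra_simps)
  qed
  then show False using assms by linarith
qed

lemma ff_region:
  assumes "\<bar>x - cc i\<bar> < rad i"
  shows "ff x = blk i (x - cc i)"
proof -
  have "(SOME i. \<bar>x - cc i\<bar> < rad i) = i"
    by (rule some_equality) (use assms regions_disjoint in blast)+
  then show ?thesis using assms unfolding ff_def by auto
qed

lemma ff_outside:
  assumes "\<forall>i. \<bar>x - cc i\<bar> \<ge> rad i" "\<bar>y - x\<bar> < 1"
  shows "ff y = 0"
proof (cases "\<exists>i. \<bar>y - cc i\<bar> < rad i")
  case True
  then obtain i where i: "\<bar>y - cc i\<bar> < rad i" by blast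
  have "\<bar>y - cc i\<bar> \<ge> 2 * real (mm i)"
    using assms(1)[rule_format, of i] assms(2) rad_ge[of i] by linarith
  then show ?thesis using ff_region[OF i] blk_zero by simp
next
  case False then show ?thesis unfolding ff_def by auto
qed

lemma sm_ff: "sm_on UNIV ff"
proof (rule sm_on_locally)
  fix x
  show "\<exists>U g. open U \<and> x \<in> U \<and> sm_on UNIV g \<and> (\<forall>y\<in>U. ff y = g y)"
  proof (cases "\<exists>i. \<bar>x - cc i\<bar> < rad i")
    case True
    then obtain i where i: "\<bar>x - cc i\<bar> < rad i" by blast
    let ?U = "{cc i - rad i <..< cc i + rad i}"
    have "open ?U" "x \<in> ?U" using i by auto
    moreover have "sm_on UNIV (\<lambda>y. blk i (y + - cc i))" by (rule sm_on_shift[OF sm_blk])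
    moreover have "\<forall>y\<in>?U. ff y = blk i (y + - cc i)"
      using ff_region by (auto simp: abs_less_iff)
    ultimately show ?thesis by blast
  next
    case False
    have "open (ball x 1)" "x \<in> ball x 1" by auto
    moreover have "\<forall>y\<in>ball x 1. ff y = (\<lambda>y. 0) y"
    proof
      fix y assume "y \<in> ball x 1"
      then have "\<bar>y - x\<bar> < 1" by (simp add: dist_real_def abs_minus_commute)
      then show "ff y = (\<lambda>y. 0) y" using ff_outside[of x y] False by (simp add: not_less)
    qed
    ultimately show ?thesis using sm_on_const by blast
  qed
qed

lemma ff_smooth: "ff \<in> smooth_fun"
  using sm_ff smooth_fun_sm_on by blast

lemma ff_orbit:
  assumes "sm_on UNIV w" "\<delta> > 0"
  shows "\<exists>n. bnd k (\<lambda>x. (tau a ^^ n) ff x - w x) \<delta>"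
proof -
  obtain p where p: "RQ p" "bnd k (\<lambda>x. poly p (of_real x) - w x) \<delta>"
    using poly_dense[OF assms] by blast
  obtain cs where cs: "polyOf cs = p" using RQ_polyOf[OF p(1)] by blast
  define i where "i = to_nat (k, cs)"
  have eni: "en i = (k, cs)" by (simp add: en_def i_def)
  have mmi: "mm i = Suc k" by (simp add: mm_def eni)
  have PPi: "PP i = p" by (simp add: PP_def eni cs)
  let ?U = "{-real (Suc k) <..< real (Suc k)}"
  have eq: "(tau a ^^ nn i) ff y - w y = poly p (of_real y) - w y" if y: "y \<in> ?U" for y
  proof -
    have "(tau a ^^ nn i) ff y = ff (y + cc i)" by (simp add: tau_iter cc_def)
    also have "\<dots> = blk i y"
    proof -
      have "\<bar>y\<bar> < rad i" using y rad_ge[of i] mmi by auto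
      then show ?thesis using ff_region[of "y + cc i" i] by simp
    qed
    also have "\<dots> = poly p (of_real y)" using blk_poly[of y i] y mmi PPi by auto
    finally show ?thesis by simp
  qed
  have "bnd k (\<lambda>x. (tau a ^^ nn i) ff x - w x) \<delta>"
    unfolding bnd_def
  proof (intro allI impI ballI)
    fix j t assume j: "j \<le> k" and t: "t \<in> {-real k..real k}"
    have "t \<in> ?U" using t by auto
    then have "vderiv j (\<lambda>x. (tau a ^^ nn i) ff x - w x) t = vderiv j (\<lambda>x. poly p (of_real x) - w x) t"
      using vderiv_local[of ?U "\<lambda>x. (tau a ^^ nn i) ff x - w x" "\<lambda>x. poly p (of_real x) - w x" t j] eq
      by auto
    then show "norm (vderiv j (\<lambda>x. (tau a ^^ nn i) ff x - w x) t) \<le> \<delta>"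
      using p(2) j t unfolding bnd_def by auto
  qed
  then show ?thesis by blast
qed

end

lemma hypercyclic_exists:
  fixes a :: real
  assumes "a \<noteq> 0"
  shows "\<exists>f. sm_on UNIV f \<and> (\<forall>w k \<delta>. sm_on UNIV w \<longrightarrow> \<delta> > 0 \<longrightarrow> (\<exists>n. bnd k (\<lambda>x. (tau a ^^ n) f x - w x) \<delta>))"
  using sm_ff[OF assms] ff_orbit[OF assms] by blast


context
  fixes P :: "complex poly"
  assumes dP: "degree P > 0"
begin

definition cvals :: "complex set" where "cvals = poly P ` {z. poly (pderiv P) z = 0}"

lemma finite_cvals: "finite cvals"
proof -
  have "pderiv P \<noteq> 0" using dP pderiv_eq_0_iff[of P] by auto
  then show ?thesis unfolding cvals_def using poly_roots_finite by blast
qed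

lemma preim_finite: "finite {z. poly P z = y}"
proof -
  have "P - [:y:] \<noteq> 0" using dP by auto
  then have "finite {z. poly (P - [:y:]) z = 0}" by (rule poly_roots_finite)
  then show ?thesis by simp
qed

lemma preim_nonempty: "\<exists>z. poly P z = y"
proof -
  have deg: "degree (P + [:-y:]) = degree P" using dP by (intro degree_add_eq_left) auto
  let ?Q = "P + [:-y:]"
  have "?Q \<noteq> 0" using deg dP by auto
  then have "coeff ?Q (degree ?Q) \<noteq> 0" by (metis leading_coeff_0_iff)
  then have "coeff ?Q 0 = 0 \<or> (\<exists>i\<in>{1..degree ?Q}. coeff ?Q i \<noteq> 0)" using deg dP by auto
  then obtain z where "(\<Sum>i\<le>degree ?Q. coeff ?Q i * z^i) = 0"
    using fundamental_theorem_of_algebra[of "coeff ?Q" "degree ?Q"] by blast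
  then have "poly ?Q z = 0" by (simp add: poly_altdef)
  then show ?thesis by auto
qed

lemma poly_proper: "\<exists>R. \<forall>z. norm z \<ge> R \<longrightarrow> norm (poly P z) \<ge> M"
proof -
  have "filterlim (poly P) at_infinity at_infinity" using filterlim_poly_at_infinity dP by blast
  then have "\<forall>r>0. eventually (\<lambda>z. r \<le> norm (poly P z)) at_infinity"
    using filterlim_at_infinity[of 0 "poly P" at_infinity] by auto
  then have "eventually (\<lambda>z. max M 1 \<le> norm (poly P z)) at_infinity"
    by (metis max.strict_coboundedI2 zero_less_one)
  then obtain R where "\<forall>z. R \<le> norm z \<longrightarrow> max M 1 \<le> norm (poly P z)"
    unfolding eventually_at_infinity by blast
  then show ?thesis by force
qed

lemma polyP_holo: "poly P holomorphic_on A"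
  using poly_holomorphic_on[where f="\<lambda>z. z" and A=A and p=P] holomorphic_on_id by simp

lemma deriv_polyP: "deriv (poly P) z = poly (pderiv P) z"
  by (rule DERIV_imp_deriv[OF poly_DERIV])

lemma poly_covering: "covering_space {z. poly P z \<notin> cvals} (poly P) (- cvals)"
proof (rule covering_spaceI)
  show "continuous_on {z. poly P z \<notin> cvals} (poly P)"
    by (rule holomorphic_on_imp_continuous_on[OF polyP_holo])
  show "poly P ` {z. poly P z \<notin> cvals} = - cvals"
    using preim_nonempty by (auto simp: image_def) (metis)
  fix y assume y: "y \<in> - cvals"
  define F where "F = {z. poly P z = y}"
  have finF: "finite F" unfolding F_def by (rule preim_finite)
  obtain z0 where z0: "z0 \<in> F" using preim_nonempty unfolding F_def by blast
  have nz: "poly (pderiv P) z \<noteq> 0" if "z \<in> F" for z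
    using y that unfolding F_def cvals_def by auto
  have "\<exists>r>0. inj_on (poly P) (ball z r)" if "z \<in> F" for z
  proof -
    have "deriv (poly P) z \<noteq> 0" using nz[OF that] by (simp add: deriv_polyP)
    then obtain r where "r > 0" "ball z r \<subseteq> UNIV" "inj_on (poly P) (ball z r)"
      by (rule has_complex_derivative_locally_injective[OF polyP_holo UNIV_I open_UNIV])
    then show ?thesis by blast
  qed
  then obtain rr where rr: "\<And>z. z \<in> F \<Longrightarrow> rr z > 0 \<and> inj_on (poly P) (ball z (rr z))" by metis
  define Rs where "Rs = rr ` F \<union> (\<lambda>(z, z'). dist z z' / 2) ` {(z, z'). z \<in> F \<and> z' \<in> F \<and> z \<noteq> z'}"
  have finRs: "finite Rs" unfolding Rs_def
    by (intro finite_UnI finite_imageI finite_subset[OF _ finite_cartesian_product[OF finF finF]]) (auto simp: finF)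
  have neRs: "Rs \<noteq> {}" using z0 unfolding Rs_def by auto
  have posRs: "\<And>x. x \<in> Rs \<Longrightarrow> x > 0" unfolding Rs_def using rr by auto
  define r where "r = Min Rs"
  have r0: "r > 0" unfolding r_def using finRs neRs posRs by (simp add: Min_gr_iff)
  have rle: "r \<le> rr z" if "z \<in> F" for z
    unfolding r_def using finRs that by (intro Min_le) (auto simp: Rs_def)
  have rdist: "2 * r \<le> dist z z'" if "z \<in> F" "z' \<in> F" "z \<noteq> z'" for z z'
  proof -
    have "r \<le> dist z z' / 2"
      unfolding r_def using finRs that by (intro Min_le) (auto simp: Rs_def image_iff intro!: bexI[of _ "(z,z')"])
    then show ?thesis by simp
  qed
  define B where "B z = ball z r" for z :: complex
  have injB: "inj_on (poly P) (B z)" if "z \<in> F" for z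
    using rr[OF that] rle[OF that] unfolding B_def by (meson inj_on_subset subset_ball)
  have disjB: "B z \<inter> B z' = {}" if "z \<in> F" "z' \<in> F" "z \<noteq> z'" for z z'
  proof -
    have "dist z x + dist x z' \<ge> dist z z'" for x by (rule dist_triangle)
    then show ?thesis using rdist[OF that] unfolding B_def by (auto simp: dist_commute) (smt (verit) dist_commute)
  qed
  have openPB: "open (poly P ` B z)" if "z \<in> F" for z
    using open_mapping_thm3[OF polyP_holo _ injB[OF that]] unfolding B_def by simp
  have yPB: "y \<in> poly P ` B z" if "z \<in> F" for z
    using that r0 unfolding B_def F_def by auto
  have "\<exists>e>0. ball y e \<subseteq> poly P ` B z" if "z \<in> F" for z
    using openPB[OF that] yPB[OF that] open_contains_ball by blast
  then obtain ee where ee: "\<And>z. z \<in> F \<Longrightarrow> ee z > 0 \<and> ball y (ee z) \<subseteq> poly P ` B z" by metis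
  obtain R where R: "\<And>z. norm z \<ge> R \<Longrightarrow> norm (poly P z) \<ge> norm y + 1"
    using poly_proper[of "norm y + 1"] by blast
  define Kc where "Kc = cball 0 R - (\<Union>z\<in>F. B z)"
  have "compact Kc" unfolding Kc_def B_def
    by (intro compact_diff compact_cball open_UN ballI open_ball)
  then have "compact (poly P ` Kc)"
    by (intro compact_continuous_image holomorphic_on_imp_continuous_on[OF polyP_holo])
  then have clK: "closed (poly P ` Kc)" by (rule compact_imp_closed)
  have yK: "y \<notin> poly P ` Kc"
  proof
    assume "y \<in> poly P ` Kc"
    then obtain x where "x \<in> Kc" "poly P x = y" by auto
    then have "x \<in> F" "x \<notin> B x" unfolding Kc_def F_def by auto
    then show False using r0 unfolding B_def by simp
  qed
  obtain e1 where e1: "e1 > 0" "ball y e1 \<subseteq> - poly P ` Kc"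
  proof -
    have "open (- poly P ` Kc)" using clK by (simp add: open_Compl)
    moreover have "y \<in> - poly P ` Kc" using yK by simp
    ultimately show ?thesis using open_contains_ball_eq that by blast
  qed
  have clV: "closed cvals" using finite_cvals by (rule finite_imp_closed)
  obtain e2 where e2: "e2 > 0" "ball y e2 \<subseteq> - cvals"
  proof -
    have "open (- cvals)" using clV by (simp add: open_Compl)
    then show ?thesis using y open_contains_ball_eq that by blast
  qed
  define Es where "Es = {e1, e2, 1} \<union> ee ` F"
  have finEs: "finite Es" unfolding Es_def using finF by simp
  have posEs: "\<And>x. x \<in> Es \<Longrightarrow> x > 0" unfolding Es_def using e1 e2 ee by auto
  define e where "e = Min Es"
  have e0: "e > 0" unfolding e_def using finEs posEs by (simp add: Min_gr_iff Es_def)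
  have ele: "e \<le> e1" "e \<le> e2" "e \<le> 1" unfolding e_def using finEs by (auto intro!: Min_le simp del: Min_insert simp: Es_def)
  have elez: "e \<le> ee z" if "z \<in> F" for z unfolding e_def using finEs that by (intro Min_le) (auto simp: Es_def)
  define T where "T = ball y e"
  define v where "v = (\<lambda>z. B z \<inter> poly P -` T) ` F"
  have TV: "T \<subseteq> - cvals" using e2(2) ele(2) subset_ball[of e e2 y] unfolding T_def by blast
  have TPB: "T \<subseteq> poly P ` B z" if "z \<in> F" for z using ee[OF that] elez[OF that] unfolding T_def by auto
  show "\<exists>T. y \<in> T \<and> openin (top_of_set (- cvals)) T \<and>
          (\<exists>v. \<Union>v = {z. poly P z \<notin> cvals} \<inter> poly P -` T \<and>
               (\<forall>u\<in>v. openin (top_of_set {z. poly P z \<notin> cvals}) u) \<and>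
               pairwise disjnt v \<and> (\<forall>u\<in>v. \<exists>q. homeomorphism u T (poly P) q))"
  proof (intro exI conjI)
    show "y \<in> T" using e0 unfolding T_def by simp
    show "openin (top_of_set (- cvals)) T"
      using TV unfolding T_def by (metis Int_absorb1 open_ball openin_open_Int inf_commute)
    show "\<Union>v = {z. poly P z \<notin> cvals} \<inter> poly P -` T"
    proof
      show "\<Union>v \<subseteq> {z. poly P z \<notin> cvals} \<inter> poly P -` T" using TV unfolding v_def by auto
      show "{z. poly P z \<notin> cvals} \<inter> poly P -` T \<subseteq> \<Union>v"
      proof
        fix x assume x: "x \<in> {z. poly P z \<notin> cvals} \<inter> poly P -` T"
        show "x \<in> \<Union>v"
        proof (cases "\<exists>z\<in>F. x \<in> B z")
          case True then show ?thesis using x unfolding v_def by auto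
        next
          case False
          show ?thesis
          proof (cases "norm x \<le> R")
            case True
            then have "x \<in> Kc" using False unfolding Kc_def by auto
            moreover have "poly P x \<in> ball y e1" using x ele unfolding T_def by auto
            ultimately show ?thesis using e1 by auto
          next
            case False
            then have "norm (poly P x) \<ge> norm y + 1" using R by simp
            moreover have "dist y (poly P x) < 1" using x ele unfolding T_def by auto
            ultimately show ?thesis
              by (metis add_le_cancel_left dist_commute dist_norm norm_triangle_ineq2 not_le add.commute
                  order_le_less_trans le_diff_eq)
          qed
        qed
      qed
    qed
    show "\<forall>u\<in>v. openin (top_of_set {z. poly P z \<notin> cvals}) u"
    proof
      fix u assume "u \<in> v"
      then obtain z where z: "z \<in> F" "u = B z \<inter> poly P -` T" unfolding v_def by auto
      have "open u" unfolding z(2) B_def T_def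
        by (intro open_Int open_ball open_vimage continuous_intros)
      moreover have "u \<subseteq> {z. poly P z \<notin> cvals}" using TV z(2) by auto
      ultimately show "openin (top_of_set {z. poly P z \<notin> cvals}) u"
        by (metis inf.absorb_iff2 openin_open_Int)
    qed
    show "pairwise disjnt v"
      unfolding v_def pairwise_def disjnt_def using disjB by blast
    show "\<forall>u\<in>v. \<exists>q. homeomorphism u T (poly P) q"
    proof
      fix u assume "u \<in> v"
      then obtain z where z: "z \<in> F" "u = B z \<inter> poly P -` T" unfolding v_def by auto
      have ou: "open u" unfolding z(2) B_def T_def
        by (intro open_Int open_ball open_vimage continuous_intros)
      have iu: "inj_on (poly P) u" using injB[OF z(1)] z(2) inj_on_subset by blast
      have cu: "continuous_on u (poly P)"
        by (rule holomorphic_on_imp_continuous_on[OF polyP_holo])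
      have im: "poly P ` u = T"
      proof
        show "poly P ` u \<subseteq> T" using z(2) by auto
        show "T \<subseteq> poly P ` u"
        proof
          fix t assume "t \<in> T"
          then obtain x where "x \<in> B z" "poly P x = t" using TPB[OF z(1)] by auto
          then show "t \<in> poly P ` u" using z(2) \<open>t \<in> T\<close> by auto
        qed
      qed
      obtain q where "homeomorphism u (poly P ` u) (poly P) q"
        using invariance_of_domain_homeomorphism[OF ou cu _ iu] by auto
      then show "\<exists>q. homeomorphism u T (poly P) q" using im by auto
    qed
  qed
qed

end


lemma sm_on_locally_gen:
  fixes f :: "real \<Rightarrow> complex"
  assumes "\<And>x. x \<in> V \<Longrightarrow> \<exists>U g. open U \<and> x \<in> U \<and> sm_on U g \<and> (\<forall>y\<in>U. f y = g y)"
  shows "sm_on V f"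
  unfolding sm_on_def sm_upto_def
proof (intro allI impI ballI)
  fix n j x assume "j \<le> (n::nat)" "x \<in> V"
  obtain U g where U: "open U" "x \<in> U" "sm_on U g" "\<forall>y\<in>U. f y = g y" using assms \<open>x \<in> V\<close> by blast
  have eq: "\<And>y. y \<in> U \<Longrightarrow> vderiv j g y = vderiv j f y"
    using vderiv_local[of U g f] U by metis
  show "vderiv j f differentiable (at x)"
    using differentiable_local[of U "vderiv j g" "vderiv j f" x] eq U(1,2) sm_on_differentiable[OF U(3) U(2)] by blast
qed

lemma perturb:
  fixes g :: "real \<Rightarrow> complex" and V :: "complex set"
  assumes "sm_on UNIV g" "finite V" "e > 0"
  shows "\<exists>c. norm c < e \<and> (\<forall>x\<in>{-K..K}. g x + c \<notin> V)"
proof -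
  define Bad where "Bad = (\<Union>v\<in>V. (\<lambda>x. v - g x) ` {-K..K})"
  have "negligible ((\<lambda>x. v - g x) ` {-K..K})" for v
  proof (rule negligible_differentiable_image_lowdim)
    show "DIM(real) < DIM(complex)" by simp
    show "(\<lambda>x. v - g x) differentiable_on {-K..K}"
      by (intro differentiable_at_imp_differentiable_on ballI differentiable_diff differentiable_const)
         (use sm_on_differentiable[OF assms(1), of _ 0] in auto)
  qed
  then have negB: "negligible Bad" unfolding Bad_def using assms(2) by (intro negligible_Union) auto
  have "\<not> ball 0 e \<subseteq> Bad"
    using negligible_subset[OF negB] open_not_negligible[of "ball (0::complex) e"] assms(3) by auto
  then obtain c where c: "c \<in> ball 0 e" "c \<notin> Bad" by blast
  have "\<forall>x\<in>{-K..K}. g x + c \<notin> V"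
  proof (intro ballI notI)
    fix x assume x: "x \<in> {-K..K}" and "g x + c \<in> V"
    then have "c \<in> Bad" unfolding Bad_def by (auto intro!: bexI[of _ "g x + c"] image_eqI[of _ _ x])
    then show False using c by simp
  qed
  then show ?thesis using c by auto
qed

lemma poly_image_dense:
  fixes P :: "complex poly" and g :: "real \<Rightarrow> complex"
  assumes dP: "degree P > 0" and sg: "sm_on UNIV g" and e: "e > 0"
  shows "\<exists>w. sm_on UNIV w \<and> bnd k (\<lambda>x. poly P (w x) - g x) e"
proof -
  define K where "K = 2 * real k + 3"
  have K0: "K > 0" by (simp add: K_def)
  obtain c where c: "norm c < e" "\<And>x. x \<in> {-K..K} \<Longrightarrow> g x + c \<notin> cvals P"
    using perturb[OF sg finite_cvals[OF dP] e, of K] by blast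
  have contg: "continuous_on S g" for S
  proof (intro continuous_at_imp_continuous_on ballI)
    fix x show "isCont g x"
      using differentiable_imp_continuous_within[OF sm_on_differentiable[OF sg, of x 0]] by simp
  qed
  define \<gamma> where "\<gamma> s = g (-K + 2 * K * s) + c" for s
  have aff: "-K + 2 * K * s \<in> {-K..K}" if "s \<in> {0..1}" for s
  proof -
    have "0 \<le> K * s" "K * s \<le> K" using that K0 by (auto simp: mult_left_le)
    then show ?thesis by auto
  qed
  have pg: "path \<gamma>" unfolding path_def \<gamma>_def
    by (intro continuous_intros continuous_on_compose2[OF contg[of UNIV]]) auto
  have pig: "path_image \<gamma> \<subseteq> - cvals P"
    unfolding path_image_def \<gamma>_def using c(2) aff by auto
  obtain h0 where h0: "path h0" "path_image h0 \<subseteq> {z. poly P z \<notin> cvals P}"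
      "\<And>s. s \<in> {0..1} \<Longrightarrow> poly P (h0 s) = \<gamma> s"
    using covering_space_lift_path[OF poly_covering[OF dP] pg pig] by blast
  define h where "h t = h0 ((t + K) / (2 * K))" for t
  have sK: "(t + K) / (2 * K) \<in> {0..1}" if "t \<in> {-K..K}" for t
    using that K0 by (auto simp: field_simps)
  have hP: "poly P (h t) = g t + c" if "t \<in> {-K..K}" for t
    using h0(3)[OF sK[OF that]] K0 by (simp add: h_def \<gamma>_def field_simps)
  have contH: "continuous_on {-K..K} h"
    unfolding h_def
  proof (rule continuous_on_compose2[OF h0(1)[unfolded path_def]])
    show "(\<lambda>t. (t + K) / (2 * K)) ` {-K..K} \<subseteq> {0..1}" using sK by auto
    show "continuous_on {-K..K} (\<lambda>t. (t + K) / (2 * K))" using K0 by (intro continuous_intros) auto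
  qed
  have sh: "sm_on {-K<..<K} h"
  proof (rule sm_on_locally_gen)
    fix t0 assume t0: "t0 \<in> {-K<..<K}"
    define z0 where "z0 = h t0"
    have "poly P z0 \<notin> cvals P" using hP[of t0] c(2)[of t0] t0 by (simp add: z0_def)
    then have nz: "poly (pderiv P) z0 \<noteq> 0" unfolding cvals_def[OF dP] by auto
    then have "deriv (poly P) z0 \<noteq> 0" by (simp add: deriv_polyP[OF dP])
    then obtain r where r: "r > 0" "ball z0 r \<subseteq> UNIV" "inj_on (poly P) (ball z0 r)"
      by (rule has_complex_derivative_locally_injective[OF polyP_holo[OF dP] UNIV_I open_UNIV])
    obtain q where q: "q holomorphic_on (poly P ` ball z0 r)" "\<And>z. z \<in> ball z0 r \<Longrightarrow> q (poly P z) = z"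
      using holomorphic_has_inverse[OF polyP_holo[OF dP] open_ball r(3)] by blast
    have oW: "open (poly P ` ball z0 r)" by (rule open_mapping_thm3[OF polyP_holo[OF dP] open_ball r(3)])
    have "isCont h t0" using continuous_on_interior[OF contH] t0 by simp
    then obtain d where d: "d > 0" "\<And>t. dist t t0 < d \<Longrightarrow> dist (h t) z0 < r"
      unfolding continuous_at_eps_delta z0_def using r(1) by blast
    define d' where "d' = min d (min (K - t0) (t0 + K))"
    have d'0: "d' > 0" using d t0 by (simp add: d'_def)
    define U where "U = ball t0 d'"
    have UK: "U \<subseteq> {-K..K}" unfolding U_def d'_def by (auto simp: dist_real_def)
    have hU: "h t \<in> ball z0 r" if "t \<in> U" for t
      using d(2)[of t] that unfolding U_def d'_def by (auto simp: dist_commute)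
    have eqU: "\<forall>t\<in>U. h t = q (g t + c)"
    proof
      fix t assume "t \<in> U"
      then have t: "t \<in> {-K..K}" using UK by blast
      show "h t = q (g t + c)" using q(2)[OF hU[OF \<open>t \<in> U\<close>]] hP[OF t] by simp
    qed
    have gW: "g t + c \<in> poly P ` ball z0 r" if "t \<in> U" for t
    proof -
      have t: "t \<in> {-K..K}" using UK that by blast
      show ?thesis using rev_image_eqI[OF hU[OF that], of "g t + c" "poly P"] hP[OF t] by simp
    qed
    have "sm_on U (\<lambda>t. q (g t + c))"
    proof (rule sm_on_comp[OF _ oW q(1) gW])
      show "open U" by (simp add: U_def)
      show "sm_on U (\<lambda>t. g t + c)" using sm_on_add[OF open_UNIV sg sm_on_const] sm_on_subset by blast
    qed
    moreover have "open U" "t0 \<in> U" using d'0 by (auto simp: U_def)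
    ultimately show "\<exists>U g. open U \<and> t0 \<in> U \<and> sm_on U g \<and> (\<forall>y\<in>U. h y = g y)"
      using eqU by blast
  qed
  define m where "m = real k + 1"
  have m0: "m > 0" by (simp add: m_def)
  define w where "w x = bump (x / m) * h x" for x
  have sb: "sm_on UNIV (\<lambda>x. bump (x / m))"
    using sm_on_affine[OF sm_on_bump, of "1/m" 0] by simp
  have sw: "sm_on UNIV w"
  proof (rule sm_on_locally_gen)
    fix x :: real
    show "\<exists>U g. open U \<and> x \<in> U \<and> sm_on U g \<and> (\<forall>y\<in>U. w y = g y)"
    proof (cases "\<bar>x\<bar> < K")
      case True
      have "sm_on {-K<..<K} (\<lambda>x. bump (x / m))" using sm_on_subset[OF sb] by blast
      then have "sm_on {-K<..<K} (\<lambda>x. bump (x / m) * h x)"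
        using sm_on_mult[OF open_greaterThanLessThan _ sh] by blast
      then have "sm_on {-K<..<K} w" unfolding w_def[abs_def] .
      moreover have "x \<in> {-K<..<K}" using True by auto
      ultimately show ?thesis by (intro exI[of _ "{-K<..<K}"] exI[of _ w]) auto
    next
      case False
      let ?U = "{y. 2 * m < \<bar>y\<bar>}"
      have "open ?U" by (intro open_Collect_less continuous_intros)
      moreover have "x \<in> ?U" using False by (simp add: K_def m_def)
      moreover have "\<forall>y\<in>?U. w y = (\<lambda>y. 0) y"
      proof
        fix y assume "y \<in> ?U"
        then have "\<bar>y / m\<bar> \<ge> 2" using m0 by (simp add: abs_divide field_simps)
        then show "w y = (\<lambda>y. 0) y" by (simp add: w_def bump_0)
      qed
      ultimately show ?thesis using sm_on_const by (intro exI[of _ ?U] exI[of _ "\<lambda>y. 0"]) auto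
    qed
  qed
  let ?U = "{-m<..<m}"
  have eqc: "poly P (w y) - g y = c" if "y \<in> ?U" for y
  proof -
    have "\<bar>y / m\<bar> \<le> 1" using that m0 by (auto simp: abs_divide field_simps)
    then have "w y = h y" by (simp add: w_def bump_1)
    moreover have "y \<in> {-K..K}" using that by (auto simp: K_def m_def)
    ultimately show ?thesis using hP by simp
  qed
  have "bnd k (\<lambda>x. poly P (w x) - g x) e"
    unfolding bnd_def
  proof (intro allI impI ballI)
    fix j t assume j: "j \<le> k" and t: "t \<in> {-real k..real k}"
    have "t \<in> ?U" using t by (auto simp: m_def)
    then have "vderiv j (\<lambda>x. poly P (w x) - g x) t = vderiv j (\<lambda>x. c) t"
      using vderiv_local[of ?U "\<lambda>x. poly P (w x) - g x" "\<lambda>x. c" t j] eqc by auto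
    also have "norm \<dots> \<le> e" using c(1) e by (simp add: vderiv_const)
    finally show "norm (vderiv j (\<lambda>x. poly P (w x) - g x) t) \<le> e" .
  qed
  then show ?thesis using sw by blast
qed


lemma sm_on_polycomp: "sm_on UNIV u \<Longrightarrow> sm_on UNIV (\<lambda>x. poly P (u x))"
  by (rule sm_on_comp[of UNIV UNIV "poly P"]) (auto intro: poly_holomorphic_on holomorphic_on_id)

lemma bnd_const: "bnd k (\<lambda>x. c) (norm c)"
  unfolding bnd_def by (simp add: vderiv_const)

lemma bnd_eq: "bnd k f M \<Longrightarrow> (\<And>x. f x = g x) \<Longrightarrow> bnd k g M"
proof -
  assume "bnd k f M" "\<And>x. f x = g x"
  then have "f = g" by auto
  then show "bnd k g M" using \<open>bnd k f M\<close> by simp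
qed

lemma poly_lip:
  fixes P :: "complex poly"
  shows "\<exists>B C. \<forall>u v \<delta>. sm_on UNIV u \<and> sm_on UNIV v \<and> bnd k u A \<and> bnd k v A \<and> bnd k (\<lambda>x. u x - v x) \<delta> \<longrightarrow>
     bnd k (\<lambda>x. poly P (u x)) B \<and> bnd k (\<lambda>x. poly P (u x) - poly P (v x)) (C * \<delta>)"
proof (induction P)
  case 0
  show ?case
    by (intro exI[of _ 0] allI impI conjI) (auto simp: bnd_def vderiv_const)
next
  case (pCons a Q)
  then obtain BQ CQ where IH: "\<And>u v \<delta>. sm_on UNIV u \<Longrightarrow> sm_on UNIV v \<Longrightarrow> bnd k u A \<Longrightarrow> bnd k v A \<Longrightarrow>
      bnd k (\<lambda>x. u x - v x) \<delta> \<Longrightarrow>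
     bnd k (\<lambda>x. poly Q (u x)) BQ \<and> bnd k (\<lambda>x. poly Q (u x) - poly Q (v x)) (CQ * \<delta>)" by blast
  have main: "bnd k (\<lambda>x. poly (pCons a Q) (u x)) (norm a + 2 ^ k * A * BQ) \<and>
      bnd k (\<lambda>x. poly (pCons a Q) (u x) - poly (pCons a Q) (v x)) ((2 ^ k * BQ + 2 ^ k * A * CQ) * \<delta>)"
    if H: "sm_on UNIV u \<and> sm_on UNIV v \<and> bnd k u A \<and> bnd k v A \<and> bnd k (\<lambda>x. u x - v x) \<delta>" for u v \<delta>
  proof -
    from H have su: "sm_on UNIV u" and sv: "sm_on UNIV v" and bu: "bnd k u A" and bv: "bnd k v A"
      and bd: "bnd k (\<lambda>x. u x - v x) \<delta>" by auto
    have sQu: "sm_on UNIV (\<lambda>x. poly Q (u x))" by (rule sm_on_polycomp[OF su])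
    have sQv: "sm_on UNIV (\<lambda>x. poly Q (v x))" by (rule sm_on_polycomp[OF sv])
    obtain bQ: "bnd k (\<lambda>x. poly Q (u x)) BQ" and cQ: "bnd k (\<lambda>x. poly Q (u x) - poly Q (v x)) (CQ * \<delta>)"
      using IH[OF su sv bu bv bd] by blast
    have "bnd k (\<lambda>x. u x * poly Q (u x)) (2 ^ k * A * BQ)"
      by (rule bnd_mult[OF su sQu bu bQ])
    then have "bnd k (\<lambda>x. 1 * a + 1 * (u x * poly Q (u x))) (norm (1::complex) * norm a + norm (1::complex) * (2 ^ k * A * BQ))"
      by (intro bnd_lin sm_on_const sm_on_mult su sQu bnd_const) auto
    then have G1: "bnd k (\<lambda>x. poly (pCons a Q) (u x)) (norm a + 2 ^ k * A * BQ)"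
      by (rule bnd_eq[OF bnd_mono]) simp_all
    have s1: "sm_on UNIV (\<lambda>x. (u x - v x) * poly Q (u x))"
      by (intro sm_on_mult sm_on_diff su sv sQu) auto
    have s2: "sm_on UNIV (\<lambda>x. v x * (poly Q (u x) - poly Q (v x)))"
      by (intro sm_on_mult sm_on_diff sv sQu sQv) auto
    have b1: "bnd k (\<lambda>x. (u x - v x) * poly Q (u x)) (2 ^ k * \<delta> * BQ)"
      by (rule bnd_mult[OF _ sQu bd bQ]) (intro sm_on_diff su sv, auto)
    have b2: "bnd k (\<lambda>x. v x * (poly Q (u x) - poly Q (v x))) (2 ^ k * A * (CQ * \<delta>))"
      by (rule bnd_mult[OF sv _ bv cQ]) (intro sm_on_diff sQu sQv, auto)
    have "bnd k (\<lambda>x. 1 * ((u x - v x) * poly Q (u x)) + 1 * (v x * (poly Q (u x) - poly Q (v x))))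
        (norm (1::complex) * (2 ^ k * \<delta> * BQ) + norm (1::complex) * (2 ^ k * A * (CQ * \<delta>)))"
      by (rule bnd_lin[OF s1 s2 b1 b2])
    then have G2: "bnd k (\<lambda>x. poly (pCons a Q) (u x) - poly (pCons a Q) (v x)) ((2 ^ k * BQ + 2 ^ k * A * CQ) * \<delta>)"
      by (rule bnd_eq[OF bnd_mono]) (auto simp: algebra_simps)
    show "bnd k (\<lambda>x. poly (pCons a Q) (u x)) (norm a + 2 ^ k * A * BQ) \<and>
      bnd k (\<lambda>x. poly (pCons a Q) (u x) - poly (pCons a Q) (v x)) ((2 ^ k * BQ + 2 ^ k * A * CQ) * \<delta>)"
      using G1 G2 by blast
  qed
  show ?case by (intro exI[of _ "norm a + 2 ^ k * A * BQ"] exI[of _ "2 ^ k * BQ + 2 ^ k * A * CQ"] allI impI main)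
qed

lemma hyp_poly:
  fixes a :: real and f :: "real \<Rightarrow> complex" and P :: "complex poly"
  assumes sf: "sm_on UNIV f"
    and hf: "\<And>w k \<delta>. sm_on UNIV w \<Longrightarrow> \<delta> > 0 \<Longrightarrow> \<exists>n. bnd k (\<lambda>x. (tau a ^^ n) f x - w x) \<delta>"
    and dP: "degree P > 0"
  shows "hypercyclic_vector (tau a) (\<lambda>x. poly P (f x))"
  unfolding hypercyclic_vector_def
proof (intro ballI allI impI)
  fix g k and e :: real assume g: "g \<in> smooth_fun" and e: "e > 0"
  have sg: "sm_on UNIV g" using g smooth_fun_sm_on by blast
  obtain w where sw: "sm_on UNIV w" and bw: "bnd k (\<lambda>x. poly P (w x) - g x) (e/3)"
    using poly_image_dense[OF dP sg, of "e/3" k] e by auto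
  obtain A0 where A0: "bnd k w A0" using bnd_exists[OF sw] by blast
  define A where "A = \<bar>A0\<bar> + 1"
  obtain B C where BC: "\<And>u v \<delta>. sm_on UNIV u \<Longrightarrow> sm_on UNIV v \<Longrightarrow> bnd k u A \<Longrightarrow> bnd k v A \<Longrightarrow>
      bnd k (\<lambda>x. u x - v x) \<delta> \<Longrightarrow> bnd k (\<lambda>x. poly P (u x) - poly P (v x)) (C * \<delta>)"
    using poly_lip[of k A P] by blast
  define \<delta> where "\<delta> = min 1 (e / (3 * (\<bar>C\<bar> + 1)))"
  have d0: "\<delta> > 0" using e by (simp add: \<delta>_def)
  obtain n where bn: "bnd k (\<lambda>x. (tau a ^^ n) f x - w x) \<delta>" using hf[OF sw d0] by blast
  define u where "u = (tau a ^^ n) f"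
  have u_eq: "u = (\<lambda>x. f (x + real n * a))" by (simp add: u_def tau_iter)
  have su: "sm_on UNIV u" unfolding u_eq by (rule sm_on_shift[OF sf])
  have bu: "bnd k u A"
  proof -
    have "bnd k (\<lambda>x. 1 * (u x - w x) + 1 * w x) (norm (1::complex) * \<delta> + norm (1::complex) * A0)"
      by (rule bnd_lin[OF _ sw]) (use bn sw su A0 in \<open>auto simp: u_def intro: sm_on_diff\<close>)
    then show ?thesis by (rule bnd_eq[OF bnd_mono]) (auto simp: A_def \<delta>_def)
  qed
  have bw': "bnd k w A" using A0 by (rule bnd_mono) (simp add: A_def)
  have bdiff: "bnd k (\<lambda>x. poly P (u x) - poly P (w x)) (C * \<delta>)"
    using BC[OF su sw bu bw'] bn unfolding u_def by blast
  have Cd: "C * \<delta> \<le> e / 3"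
  proof -
    have "C * \<delta> \<le> \<bar>C\<bar> * \<delta>" using d0 by (simp add: mult_right_mono)
    also have "\<dots> \<le> (\<bar>C\<bar> + 1) * (e / (3 * (\<bar>C\<bar> + 1)))"
      using d0 by (intro mult_mono) (auto simp: \<delta>_def)
    also have "\<dots> = e / 3"
    proof -
      have "\<bar>C\<bar> + 1 \<noteq> 0" by (metis abs_ge_zero add_nonneg_pos zero_less_one less_irrefl)
      then show ?thesis by (simp add: field_simps)
    qed
    finally show ?thesis .
  qed
  have s1: "sm_on UNIV (\<lambda>x. poly P (u x) - poly P (w x))"
    by (intro sm_on_diff sm_on_polycomp su sw) auto
  have s2: "sm_on UNIV (\<lambda>x. poly P (w x) - g x)"
    by (intro sm_on_diff sm_on_polycomp sw sg) auto
  have "bnd k (\<lambda>x. 1 * (poly P (u x) - poly P (w x)) + 1 * (poly P (w x) - g x))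
      (norm (1::complex) * (C * \<delta>) + norm (1::complex) * (e/3))"
    by (rule bnd_lin[OF s1 s2 bdiff bw])
  then have "bnd k (\<lambda>x. (tau a ^^ n) (\<lambda>x. poly P (f x)) x - g x) (2 * e / 3)"
    by (rule bnd_eq[OF bnd_mono]) (use Cd in \<open>auto simp: u_eq tau_iter\<close>)
  then have "seminorm_p k (\<lambda>x. (tau a ^^ n) (\<lambda>x. poly P (f x)) x - g x) \<le> 2 * e / 3"
    by (rule seminorm_le)
  then show "\<exists>n. seminorm_p k (\<lambda>x. (tau a ^^ n) (\<lambda>x. poly P (f x)) x - g x) < e"
    using e by (intro exI[of _ n]) simp
qed

theorem corollary21:
  fixes a :: real
  assumes "a \<noteq> 0"
  shows "supports_hypercyclic_algebra (tau a)"
proof -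
  obtain f where sf: "sm_on UNIV f"
    and hf: "\<And>w k \<delta>. sm_on UNIV w \<Longrightarrow> \<delta> > 0 \<Longrightarrow> \<exists>n. bnd k (\<lambda>x. (tau a ^^ n) f x - w x) \<delta>"
    using hypercyclic_exists[OF assms] by blast
  define A where "A = {h. \<exists>P. poly P 0 = 0 \<and> h = (\<lambda>x. poly P (f x))}"
  have sub: "smooth_subalgebra A"
    unfolding smooth_subalgebra_def
  proof (intro conjI ballI allI)
    show "A \<subseteq> smooth_fun" unfolding A_def using sm_on_polycomp[OF sf] smooth_fun_sm_on by blast
    show "(\<lambda>x. 0) \<in> A" unfolding A_def by (intro CollectI exI[of _ 0]) auto
    fix h1 h2 assume "h1 \<in> A" "h2 \<in> A"
    then obtain P1 P2 where P: "poly P1 0 = 0" "h1 = (\<lambda>x. poly P1 (f x))" "poly P2 0 = 0" "h2 = (\<lambda>x. poly P2 (f x))"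
      unfolding A_def by blast
    show "(\<lambda>x. h1 x + h2 x) \<in> A" unfolding A_def using P by (intro CollectI exI[of _ "P1 + P2"]) auto
    show "(\<lambda>x. h1 x * h2 x) \<in> A" unfolding A_def using P by (intro CollectI exI[of _ "P1 * P2"]) auto
  next
    fix c :: complex and h assume "h \<in> A"
    then obtain P1 where P: "poly P1 0 = 0" "h = (\<lambda>x. poly P1 (f x))" unfolding A_def by blast
    show "(\<lambda>x. c * h x) \<in> A" unfolding A_def using P by (intro CollectI exI[of _ "smult c P1"]) auto
  qed
  have fA: "f \<in> A" unfolding A_def by (intro CollectI exI[of _ "[:0, 1:]"]) auto
  have fnz: "f \<noteq> (\<lambda>x. 0)"
  proof
    assume f0: "f = (\<lambda>x. 0)"
    obtain n where "bnd 0 (\<lambda>x. (tau a ^^ n) f x - 1) (1/2)"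
      using hf[of "\<lambda>x. 1" "1/2" 0] sm_on_const by auto
    then have "norm (vderiv 0 (\<lambda>x. (tau a ^^ n) f x - 1) 0) \<le> 1/2" unfolding bnd_def by auto
    then show False by (simp add: f0 tau_iter)
  qed
  have "\<forall>h\<in>A. h \<noteq> (\<lambda>x. 0) \<longrightarrow> hypercyclic_vector (tau a) h"
  proof (intro ballI impI)
    fix h assume "h \<in> A" "h \<noteq> (\<lambda>x. 0)"
    then obtain P where P: "poly P 0 = 0" "h = (\<lambda>x. poly P (f x))" unfolding A_def by blast
    have "degree P > 0"
    proof (rule ccontr)
      assume "\<not> degree P > 0"
      then have "degree P = 0" by simp
      then obtain c where "P = [:c:]" by (metis degree_eq_zeroE)
      then have "P = 0" using P(1) by simp
      then show False using P(2) \<open>h \<noteq> (\<lambda>x. 0)\<close> by simp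
    qed
    then show "hypercyclic_vector (tau a) h" using hyp_poly[OF sf hf] P(2) by blast
  qed
  then show ?thesis unfolding supports_hypercyclic_algebra_def using sub fA fnz by blast
qed


end
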